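(* Suppose that $M=1$ and $\theta\neq\omega^2$. Then $\beta$ is contained in the $\mathcal{O}$-span of the symbols $\alpha_{\chi,\psi}=\alpha^{1,1}_{\chi,\psi}$ with $\chi\in X_N\setminus\{\omega^2,\theta\omega^{-2}\}$ (and $\psi=\theta\chi^{-1}$). In particular, $\beta\in A$.
   Context: $p$ is an odd prime, $M=1$, and $N=Mp=p$. $\Delta=(\mathbb{Z}/N\mathbb{Z})^\times/\langle-1\rangle$; $H$ is a space of level $N$ modular symbols: a $\mathbb{Z}_p[\Delta]$-module spanned by symbols $[u:v]$ ($u,v\in\mathbb{Z}/N\mathbb{Z}$ generating the unit ideal) satisfying $[u:v]=[-u:-v]=-[-v:u]$, $[u:v]=[u:u+v]+[u+v:v]$, $\langle a\rangle[u:v]=[au:av]$. $\theta:\Delta\to\mathbb{C}_p^\times$ is a character, $\omega$ the Teichmüller character of $(\mathbb{Z}/p\mathbb{Z})^\times$; it is assumed that the conductor of $\theta\omega^{-2}$ is $p$ if $p=3$. $\mathcal{O}=\mathbb{Z}_p[\mu_{\varphi(N)}]$, $X_N=\mathrm{Hom}((\mathbb{Z}/N\mathbb{Z})^\times,\mathcal{O}^\times)$, $e_\theta=\frac1{\varphi(N)}\sum_a\theta^{-1}(a)\langle a\rangle$, $H^\theta=e_\theta(H\otimes\mathcal{O})$. For $\chi\in X_N$, $\psi=\theta\chi^{-1}$ and relatively prime divisors $g,h$ of $N$, $\alpha^{g,h}_{\chi,\psi}=\frac1{\varphi(N)^2}\sum_{a,b\in(\mathbb{Z}/N\mathbb{Z})^\times}\chi^{-1}(a)\psi^{-1}(b)[ga:hb]$.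 Set $\beta=\alpha^{1,1}_{\omega^2,\theta\omega^{-2}}$, and let $A\subseteq H^\theta$ be the $\mathcal{O}$-span of all $\alpha^{g,h}_{\chi,\psi}$ with $\chi\notin\{\omega^2,\theta\omega^{-2}\}$ and $g,h$ relatively prime divisors of $N$. *)

theory Defs
  imports "HOL-Algebra.Ring" "HOL-Number_Theory.Number_Theory"
begin

text \<open>Z_p is modelled as the inverse limit of the rings Z/p^n Z: an element is a
compatible sequence x with 0 \<le> x n < p^n and x (n+1) mod p^n = x n.
Ring operations are componentwise (reduced mod p^n).\<close>

definition padic_ints :: "nat \<Rightarrow> (nat \<Rightarrow> int) ring" where
  "padic_ints p =
     \<lparr>carrier = {x. \<forall>n. 0 \<le> x n \<and> x n < int p ^ n \<and> x (Suc n) mod int p ^ n = x n},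
      mult = (\<lambda>x y n. (x n * y n) mod int p ^ n),
      one = (\<lambda>n. 1 mod int p ^ n),
      zero = (\<lambda>n. 0),
      add = (\<lambda>x y n. (x n + y n) mod int p ^ n)\<rparr>"

definition zp_of_int :: "nat \<Rightarrow> int \<Rightarrow> (nat \<Rightarrow> int)" where
  "zp_of_int p k = (\<lambda>n. k mod int p ^ n)"

text \<open>Here N = p, and O = Z_p[mu_(phi(N))] = Z_p since mu_(p-1) is contained in Z_p.
A character of (Z/NZ)^x with values in O^x is represented (Dirichlet-style) by a
function on the integers that is N-periodic, multiplicative on units, unit-valued on
integers prime to N and zero on integers not prime to N.\<close>

definition is_char :: "nat \<Rightarrow> nat \<Rightarrow> (int \<Rightarrow> nat \<Rightarrow> int) \<Rightarrow> bool" where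
  "is_char p N \<chi> \<longleftrightarrow>
     (\<forall>a b. [a = b] (mod int N) \<longrightarrow> \<chi> a = \<chi> b) \<and>
     (\<forall>a. coprime a (int N) \<longrightarrow> \<chi> a \<in> Units (padic_ints p)) \<and>
     (\<forall>a. \<not> coprime a (int N) \<longrightarrow> \<chi> a = \<zero>\<^bsub>padic_ints p\<^esub>) \<and>
     (\<forall>a b. coprime a (int N) \<longrightarrow> coprime b (int N) \<longrightarrow>
         \<chi> (a * b) = \<chi> a \<otimes>\<^bsub>padic_ints p\<^esub> \<chi> b)"

definition char_group :: "nat \<Rightarrow> nat \<Rightarrow> (int \<Rightarrow> nat \<Rightarrow> int) set" where
  "char_group p N = {\<chi>. is_char p N \<chi>}"

text \<open>Characters of Delta = (Z/NZ)^x / <-1>: the even characters.\<close>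
definition is_Delta_char :: "nat \<Rightarrow> nat \<Rightarrow> (int \<Rightarrow> nat \<Rightarrow> int) \<Rightarrow> bool" where
  "is_Delta_char p N \<theta> \<longleftrightarrow> is_char p N \<theta> \<and> \<theta> (-1) = \<one>\<^bsub>padic_ints p\<^esub>"

definition char_mult :: "nat \<Rightarrow> nat \<Rightarrow> (int \<Rightarrow> nat \<Rightarrow> int) \<Rightarrow> (int \<Rightarrow> nat \<Rightarrow> int) \<Rightarrow> (int \<Rightarrow> nat \<Rightarrow> int)" where
  "char_mult p N \<chi> \<psi> = (\<lambda>a. if coprime a (int N) then \<chi> a \<otimes>\<^bsub>padic_ints p\<^esub> \<psi> a
                                else \<zero>\<^bsub>padic_ints p\<^esub>)"

definition char_inv :: "nat \<Rightarrow> nat \<Rightarrow> (int \<Rightarrow> nat \<Rightarrow> int) \<Rightarrow> (int \<Rightarrow> nat \<Rightarrow> int)" where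
  "char_inv p N \<chi> = (\<lambda>a. if coprime a (int N) then inv\<^bsub>padic_ints p\<^esub> (\<chi> a)
                         else \<zero>\<^bsub>padic_ints p\<^esub>)"

definition teichmuller :: "nat \<Rightarrow> int \<Rightarrow> nat \<Rightarrow> int" where
  "teichmuller p a = (if coprime a (int p) then
      (THE x. x \<in> carrier (padic_ints p) \<and> x [^]\<^bsub>padic_ints p\<^esub> (p - 1) = \<one>\<^bsub>padic_ints p\<^esub>
              \<and> x 1 = a mod int p)
     else \<zero>\<^bsub>padic_ints p\<^esub>)"

definition zp_span :: "nat \<Rightarrow> ((nat \<Rightarrow> int) \<Rightarrow> 'h \<Rightarrow> 'h::ab_group_add) \<Rightarrow> 'h set \<Rightarrow> 'h set" where
  "zp_span p smul S = {v. \<exists>F c. finite F \<and> F \<subseteq> S \<and> (\<forall>x\<in>F. c x \<in> carrier (padic_ints p)) \<and>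
                             v = (\<Sum>x\<in>F. smul (c x) x)}"

definition zp_module :: "nat \<Rightarrow> ((nat \<Rightarrow> int) \<Rightarrow> 'h \<Rightarrow> 'h::ab_group_add) \<Rightarrow> bool" where
  "zp_module p smul \<longleftrightarrow>
     (\<forall>x\<in>carrier (padic_ints p). \<forall>y\<in>carrier (padic_ints p). \<forall>v.
         smul (x \<oplus>\<^bsub>padic_ints p\<^esub> y) v = smul x v + smul y v \<and>
         smul (x \<otimes>\<^bsub>padic_ints p\<^esub> y) v = smul x (smul y v)) \<and>
     (\<forall>x\<in>carrier (padic_ints p). \<forall>v w. smul x (v + w) = smul x v + smul x w) \<and>
     (\<forall>v. smul \<one>\<^bsub>padic_ints p\<^esub> v = v)"

definition unimodular :: "nat \<Rightarrow> int \<Rightarrow> int \<Rightarrow> bool" where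
  "unimodular N u v \<longleftrightarrow> coprime (gcd u v) (int N)"

text \<open>A space of level N modular symbols (tensored with O): a Z_p-module H with a
Z_p-linear action dia of the diamond operators <a>, spanned over Z_p by symbols
msym u v = [u:v] (u, v taken modulo N, generating the unit ideal) subject to the
Manin relations.\<close>
definition modsym_space :: "nat \<Rightarrow> nat \<Rightarrow> ((nat \<Rightarrow> int) \<Rightarrow> 'h \<Rightarrow> 'h::ab_group_add)
     \<Rightarrow> (int \<Rightarrow> 'h \<Rightarrow> 'h) \<Rightarrow> (int \<Rightarrow> int \<Rightarrow> 'h) \<Rightarrow> bool" where
  "modsym_space p N smul dia msym \<longleftrightarrow>
     zp_module p smul \<and>
     (\<forall>u v u' v'. [u = u'] (mod int N) \<longrightarrow> [v = v'] (mod int N) \<longrightarrow> msym u v = msym u' v') \<and>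
     (\<forall>u v. unimodular N u v \<longrightarrow> msym u v = msym (-u) (-v)) \<and>
     (\<forall>u v. unimodular N u v \<longrightarrow> msym u v = - msym (-v) u) \<and>
     (\<forall>u v. unimodular N u v \<longrightarrow> msym u v = msym u (u + v) + msym (u + v) v) \<and>
     (\<forall>a v w. coprime a (int N) \<longrightarrow> dia a (v + w) = dia a v + dia a w) \<and>
     (\<forall>a x v. coprime a (int N) \<longrightarrow> x \<in> carrier (padic_ints p) \<longrightarrow>
         dia a (smul x v) = smul x (dia a v)) \<and>
     (\<forall>a a' v. [a = a'] (mod int N) \<longrightarrow> dia a v = dia a' v) \<and>
     (\<forall>a u v. coprime a (int N) \<longrightarrow> unimodular N u v \<longrightarrow> dia a (msym u v) = msym (a * u) (a * v)) \<and>
     zp_span p smul {msym u v | u v. unimodular N u v} = UNIV"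

definition alpha_sym :: "nat \<Rightarrow> nat \<Rightarrow> ((nat \<Rightarrow> int) \<Rightarrow> 'h \<Rightarrow> 'h::ab_group_add)
     \<Rightarrow> (int \<Rightarrow> int \<Rightarrow> 'h) \<Rightarrow> int \<Rightarrow> int \<Rightarrow> (int \<Rightarrow> nat \<Rightarrow> int) \<Rightarrow> (int \<Rightarrow> nat \<Rightarrow> int) \<Rightarrow> 'h" where
  "alpha_sym p N smul msym g h \<chi> \<psi> =
     smul (inv\<^bsub>padic_ints p\<^esub> (zp_of_int p (int (totient N) ^ 2)))
       (\<Sum>a\<in>{a\<in>{0..<int N}. coprime a (int N)}. \<Sum>b\<in>{b\<in>{0..<int N}. coprime b (int N)}.
          smul (char_inv p N \<chi> a \<otimes>\<^bsub>padic_ints p\<^esub> char_inv p N \<psi> b) (msym (g * a) (h * b)))"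

end

theory Submission
  imports Defs
begin


lemma zp_carrier_iff:
  "x \<in> carrier (padic_ints p) \<longleftrightarrow> (\<forall>n. 0 \<le> x n \<and> x n < int p ^ n \<and> x (Suc n) mod int p ^ n = x n)"
  by (simp add: padic_ints_def)

lemma zp_simps:
  "mult (padic_ints p) x y = (\<lambda>n. (x n * y n) mod int p ^ n)"
  "add (padic_ints p) x y = (\<lambda>n. (x n + y n) mod int p ^ n)"
  "one (padic_ints p) = (\<lambda>n. 1 mod int p ^ n)"
  "zero (padic_ints p) = (\<lambda>n. 0)"
  by (simp_all add: padic_ints_def)

lemma zp_compat:
  assumes "x \<in> carrier (padic_ints p)" "n \<le> m"
  shows "x m mod int p ^ n = x n"
  using assms(2)
proof (induction m)
  case 0
  have "0 \<le> x 0" "x 0 < 1" using assms(1) zp_carrier_iff[of x p] by (metis power_0)+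
  then show ?case using 0 by simp
next
  case (Suc m)
  show ?case
  proof (cases "n = Suc m")
    case True
    have "0 \<le> x (Suc m)" "x (Suc m) < int p ^ Suc m" using assms(1) zp_carrier_iff[of x p] by blast+
    then show ?thesis using True by (simp only:) (rule mod_pos_pos_trivial)
  next
    case False
    then have "n \<le> m" using Suc by simp
    have "x (Suc m) mod int p ^ n = (x (Suc m) mod int p ^ m) mod int p ^ n"
      by (simp add: \<open>n \<le> m\<close> le_imp_power_dvd mod_mod_cancel)
    also have "\<dots> = x m mod int p ^ n" using assms(1) by (simp add: zp_carrier_iff)
    finally show ?thesis using Suc.IH \<open>n \<le> m\<close> by simp
  qed
qed

lemma zp_self_mod:
  assumes "x \<in> carrier (padic_ints p)"
  shows "x n mod int p ^ n = x n"
  using zp_compat[OF assms, of n n] by simp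

lemma zp_eqI:
  assumes "\<And>n. x n = y n" shows "x = y"
  using assms by auto

lemma zp_modI:
  assumes "p > 0" "\<And>n. f (Suc n) mod int p ^ n = f n mod int p ^ n"
  shows "(\<lambda>n. f n mod int p ^ n) \<in> carrier (padic_ints p)"
proof -
  have "(f (Suc n) mod int p ^ Suc n) mod int p ^ n = f n mod int p ^ n" for n
  proof -
    have "(f (Suc n) mod int p ^ Suc n) mod int p ^ n = f (Suc n) mod int p ^ n"
      by (simp add: mod_mod_cancel le_imp_power_dvd)
    then show ?thesis using assms(2) by simp
  qed
  then show ?thesis using assms(1) by (simp add: zp_carrier_iff)
qed

lemma zp_cring:
  assumes "p > 0"
  shows "cring (padic_ints p)"
proof -
  let ?R = "padic_ints p"
  have mp: "\<And>x n. x \<in> carrier ?R \<Longrightarrow> x (Suc n) mod int p ^ n = x n" by (simp add: zp_carrier_iff)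
  have sm: "\<And>x n. x \<in> carrier ?R \<Longrightarrow> x n mod int p ^ n = x n" by (rule zp_self_mod)
  have add_closed: "x \<oplus>\<^bsub>?R\<^esub> y \<in> carrier ?R" if "x \<in> carrier ?R" "y \<in> carrier ?R" for x y
    unfolding zp_simps
    apply (rule zp_modI[OF assms])
    by (metis mod_add_eq mp that)
  have mult_closed: "x \<otimes>\<^bsub>?R\<^esub> y \<in> carrier ?R" if "x \<in> carrier ?R" "y \<in> carrier ?R" for x y
    unfolding zp_simps
    apply (rule zp_modI[OF assms])
    by (metis mod_mult_eq mp that)
  have one_closed: "\<one>\<^bsub>?R\<^esub> \<in> carrier ?R"
    unfolding zp_simps by (rule zp_modI[OF assms]) simp
  have zero_closed: "\<zero>\<^bsub>?R\<^esub> \<in> carrier ?R"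
    using assms by (simp add: zp_carrier_iff zp_simps)
  have ag: "abelian_group ?R"
  proof (rule abelian_groupI)
    fix x y z assume xyz: "x \<in> carrier ?R" "y \<in> carrier ?R" "z \<in> carrier ?R"
    show "(x \<oplus>\<^bsub>?R\<^esub> y) \<oplus>\<^bsub>?R\<^esub> z = x \<oplus>\<^bsub>?R\<^esub> (y \<oplus>\<^bsub>?R\<^esub> z)"
      unfolding zp_simps by (auto simp: mod_add_left_eq mod_add_right_eq add.assoc)
  next
    fix x y show "x \<oplus>\<^bsub>?R\<^esub> y = y \<oplus>\<^bsub>?R\<^esub> x" unfolding zp_simps by (auto simp: add.commute)
  next
    fix x assume x: "x \<in> carrier ?R"
    show "\<zero>\<^bsub>?R\<^esub> \<oplus>\<^bsub>?R\<^esub> x = x" unfolding zp_simps using sm[OF x] by auto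
    show "\<exists>y\<in>carrier ?R. y \<oplus>\<^bsub>?R\<^esub> x = \<zero>\<^bsub>?R\<^esub>"
    proof
      show "(\<lambda>n. (- x n) mod int p ^ n) \<in> carrier ?R"
        apply (rule zp_modI[OF assms]) by (metis mod_minus_eq mp x)
      show "(\<lambda>n. (- x n) mod int p ^ n) \<oplus>\<^bsub>?R\<^esub> x = \<zero>\<^bsub>?R\<^esub>"
        unfolding zp_simps by (auto simp: mod_add_left_eq)
    qed
  qed (use add_closed zero_closed in auto)
  have cm: "comm_monoid ?R"
  proof (rule comm_monoidI)
    fix x y z assume xyz: "x \<in> carrier ?R" "y \<in> carrier ?R" "z \<in> carrier ?R"
    show "(x \<otimes>\<^bsub>?R\<^esub> y) \<otimes>\<^bsub>?R\<^esub> z = x \<otimes>\<^bsub>?R\<^esub> (y \<otimes>\<^bsub>?R\<^esub> z)"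
      unfolding zp_simps by (auto simp: mod_mult_left_eq mod_mult_right_eq mult.assoc)
  next
    fix x y show "x \<otimes>\<^bsub>?R\<^esub> y = y \<otimes>\<^bsub>?R\<^esub> x" unfolding zp_simps by (auto simp: mult.commute)
  next
    fix x assume x: "x \<in> carrier ?R"
    show "\<one>\<^bsub>?R\<^esub> \<otimes>\<^bsub>?R\<^esub> x = x" unfolding zp_simps using sm[OF x]
      by (auto simp: mod_mult_left_eq)
  qed (use mult_closed one_closed in auto)
  show ?thesis
  proof (rule cringI[OF ag cm])
    fix x y z assume xyz: "x \<in> carrier ?R" "y \<in> carrier ?R" "z \<in> carrier ?R"
    show "(x \<oplus>\<^bsub>?R\<^esub> y) \<otimes>\<^bsub>?R\<^esub> z = x \<otimes>\<^bsub>?R\<^esub> z \<oplus>\<^bsub>?R\<^esub> y \<otimes>\<^bsub>?R\<^esub> z"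
      unfolding zp_simps by (auto simp: mod_mult_left_eq mod_add_eq distrib_right)
  qed
qed


lemma zp_minus_comp:
  assumes "p > 0" "x \<in> carrier (padic_ints p)"
  shows "\<ominus>\<^bsub>padic_ints p\<^esub> x = (\<lambda>n. (- x n) mod int p ^ n)"
proof -
  interpret R: cring "padic_ints p" by (rule zp_cring[OF assms(1)])
  have c: "(\<lambda>n. (- x n) mod int p ^ n) \<in> carrier (padic_ints p)"
    apply (rule zp_modI[OF assms(1)])
    by (metis mod_minus_eq assms(2) zp_carrier_iff)
  have "(\<lambda>n. (- x n) mod int p ^ n) \<oplus>\<^bsub>padic_ints p\<^esub> x = \<zero>\<^bsub>padic_ints p\<^esub>"
    unfolding zp_simps by (auto simp: mod_add_left_eq)
  then show ?thesis using R.minus_equality[OF _ assms(2) c] by simp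
qed

lemma zp_pow_comp:
  assumes "p > 0" "x \<in> carrier (padic_ints p)"
  shows "x [^]\<^bsub>padic_ints p\<^esub> (k::nat) = (\<lambda>n. (x n) ^ k mod int p ^ n)"
proof (induction k)
  case 0 then show ?case by (simp add: zp_simps)
next
  case (Suc k)
  interpret R: cring "padic_ints p" by (rule zp_cring[OF assms(1)])
  have "x [^]\<^bsub>padic_ints p\<^esub> Suc k = x [^]\<^bsub>padic_ints p\<^esub> k \<otimes>\<^bsub>padic_ints p\<^esub> x" by simp
  also have "\<dots> = (\<lambda>n. (x n) ^ Suc k mod int p ^ n)"
    unfolding Suc zp_simps
    by (auto simp: mod_mult_left_eq mod_mult_right_eq mult.commute)
  finally show ?case .
qed

lemma zp_of_int_carrier:
  assumes "p > 0" shows "zp_of_int p k \<in> carrier (padic_ints p)"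
  unfolding zp_of_int_def by (rule zp_modI[OF assms]) simp

lemma zp_of_int_mult:
  "zp_of_int p a \<otimes>\<^bsub>padic_ints p\<^esub> zp_of_int p b = zp_of_int p (a * b)"
  unfolding zp_of_int_def zp_simps by (auto simp: mod_mult_eq)

lemma zp_of_int_add:
  "zp_of_int p a \<oplus>\<^bsub>padic_ints p\<^esub> zp_of_int p b = zp_of_int p (a + b)"
  unfolding zp_of_int_def zp_simps by (auto simp: mod_add_eq)

lemma zp_of_int_1: "zp_of_int p 1 = \<one>\<^bsub>padic_ints p\<^esub>"
  unfolding zp_of_int_def zp_simps by simp

lemma zp_comp1_mod:
  assumes "x \<in> carrier (padic_ints p)" "n \<ge> 1"
  shows "x n mod int p = x 1"
  using zp_compat[OF assms(1), of 1 n] assms(2) by simp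

lemma zp_unitI:
  assumes "prime p" "x \<in> carrier (padic_ints p)" "coprime (x 1) (int p)"
  shows "x \<in> Units (padic_ints p)"
proof -
  have p0: "p > 0" using assms(1) prime_gt_0_nat by blast
  interpret R: cring "padic_ints p" by (rule zp_cring[OF p0])
  have cop: "coprime (x n) (int p ^ n)" for n
  proof (cases "n = 0")
    case True then show ?thesis by simp
  next
    case False
    then have "x n mod int p = x 1" using zp_comp1_mod[OF assms(2)] by simp
    then have "coprime (x n) (int p)" using assms(3)
      by (metis coprime_mod_left_iff of_nat_eq_0_iff p0 less_irrefl)
    then show ?thesis by simp
  qed
  define P where "P n y \<longleftrightarrow> 0 \<le> y \<and> y < int p ^ n \<and> (x n * y) mod int p ^ n = 1 mod int p ^ n" for n y
  have ex: "\<exists>y. P n y" for n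
  proof -
    obtain z where z: "[x n * z = 1] (mod int p ^ n)" using cong_solve_coprime_int[OF cop[of n]] by blast
    have "P n (z mod int p ^ n)"
      unfolding P_def using p0 z
      by (auto simp: cong_def mod_mult_right_eq)
    then show ?thesis by blast
  qed
  have uniq: "y = y'" if "P n y" "P n y'" for n y y'
  proof -
    have "[x n * y = x n * y'] (mod int p ^ n)" using that unfolding P_def cong_def by simp
    then have "[y = y'] (mod int p ^ n)"
      using cong_mult_lcancel[OF cop[of n]] by blast
    then show ?thesis using that unfolding P_def cong_def by simp
  qed
  define y where "y n = (SOME y. P n y)" for n
  have Py: "P n (y n)" for n unfolding y_def using someI_ex[OF ex[of n]] .
  have ycompat: "y (Suc n) mod int p ^ n = y n" for n
  proof -
    have "P n (y (Suc n) mod int p ^ n)"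
    proof -
      have "(x n * (y (Suc n) mod int p ^ n)) mod int p ^ n = (x (Suc n) * y (Suc n)) mod int p ^ n"
        using assms(2) by (metis mod_mult_eq zp_carrier_iff)
      also have "\<dots> = ((x (Suc n) * y (Suc n)) mod int p ^ Suc n) mod int p ^ n"
        by (simp add: mod_mod_cancel le_imp_power_dvd)
      also have "\<dots> = 1 mod int p ^ n"
        using Py[of "Suc n"] unfolding P_def by (simp add: mod_mod_cancel le_imp_power_dvd)
      finally show ?thesis unfolding P_def using p0 by simp
    qed
    then show ?thesis using uniq Py by blast
  qed
  have yc: "y \<in> carrier (padic_ints p)"
    using Py ycompat unfolding P_def zp_carrier_iff by blast
  have xy: "x \<otimes>\<^bsub>padic_ints p\<^esub> y = \<one>\<^bsub>padic_ints p\<^esub>"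
    unfolding zp_simps using Py unfolding P_def by auto
  have yx: "y \<otimes>\<^bsub>padic_ints p\<^esub> x = \<one>\<^bsub>padic_ints p\<^esub>"
    using xy R.m_comm[OF assms(2) yc] by simp
  show ?thesis unfolding Units_def using assms(2) yc xy yx by blast
qed

lemma zp_unitD:
  assumes "prime p" "x \<in> Units (padic_ints p)"
  shows "coprime (x 1) (int p)"
proof -
  obtain y where "y \<in> carrier (padic_ints p)" "x \<otimes>\<^bsub>padic_ints p\<^esub> y = \<one>\<^bsub>padic_ints p\<^esub>"
    using assms(2) unfolding Units_def by blast
  then have "(x 1 * y 1) mod int p = 1 mod int p"
    unfolding zp_simps by (metis power_one_right)
  then have "[x 1 * y 1 = 1] (mod int p)" by (simp add: cong_def)
  then show ?thesis
    by (metis cong_imp_coprime coprime_1_left coprime_mult_left_iff cong_sym)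
qed


lemma euler_int:
  assumes "coprime (a::int) (int m)" "m > 0"
  shows "[a ^ totient m = 1] (mod int m)"
proof -
  have False: "m \<noteq> 0" using assms(2) by simp
  define b where "b = nat (a mod int m)"
  have ib: "int b = a mod int m" using False unfolding b_def by simp
  have "coprime (int b) (int m)" using assms ib False
    by (metis coprime_mod_left_iff of_nat_eq_0_iff)
  then have "coprime b m" by simp
  then have "[b ^ totient m = 1] (mod m)" by (rule euler_theorem)
  then have "[int b ^ totient m = 1] (mod int m)"
    by (metis cong_int_iff of_nat_1 of_nat_power)
  moreover have "[a = int b] (mod int m)" using ib by (simp add: cong_def)
  ultimately show ?thesis by (meson cong_pow cong_trans)
qed

lemma fermat_int:
  assumes "prime p" "coprime (a::int) (int p)"
  shows "[a ^ p = a] (mod int p)"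
proof -
  have "[a ^ (p - 1) = 1] (mod int p)" using euler_int[OF assms(2) prime_gt_0_nat[OF assms(1)]] totient_prime[OF assms(1)] by simp
  then have "[a ^ (p - 1) * a = 1 * a] (mod int p)" by (rule cong_mult) simp
  moreover have "a ^ (p - 1) * a = a ^ p" using prime_gt_0_nat[OF assms(1)]
    by (metis Suc_diff_1 power_Suc2)
  ultimately show ?thesis by simp
qed

lemma pow_lift:
  assumes "prime p" "k \<ge> 1" "[x = y] (mod int p ^ k)"
  shows "[x ^ p = y ^ p] (mod int p ^ Suc k)"
proof -
  obtain n where pn: "p = Suc n" using prime_gt_0_nat[OF assms(1)] by (metis gr0_conv_Suc)
  have d: "x ^ p - y ^ p = (x - y) * (\<Sum>q<Suc n. x ^ q * y ^ (n - q))"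
    unfolding pn by (rule diff_power_eq_sum)
  have xy: "[x = y] (mod int p)"
    by (rule cong_dvd_modulus[OF assms(3)]) (use assms(2) in \<open>simp add: dvd_power\<close>)
  have "[(\<Sum>q<Suc n. x ^ q * y ^ (n - q)) = (\<Sum>q<Suc n. y ^ q * y ^ (n - q))] (mod int p)"
    by (intro cong_sum cong_mult cong_pow xy cong_refl)
  moreover have "(\<Sum>q<Suc n. y ^ q * y ^ (n - q)) = int p * y ^ n"
  proof -
    have "(\<Sum>q<Suc n. y ^ q * y ^ (n - q)) = (\<Sum>q<Suc n. y ^ n)"
      by (intro sum.cong refl) (simp add: power_add[symmetric])
    then show ?thesis using pn by simp
  qed
  ultimately have "int p dvd (\<Sum>q<Suc n. x ^ q * y ^ (n - q))"
    by (metis cong_dvd_iff dvd_triv_left)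
  moreover have "int p ^ k dvd (x - y)" using assms(3) by (simp add: cong_iff_dvd_diff)
  ultimately have "int p ^ k * int p dvd (x ^ p - y ^ p)" unfolding d
    by (simp add: mult_dvd_mono)
  then show ?thesis by (simp add: cong_iff_dvd_diff mult.commute)
qed

definition teich_seq :: "nat \<Rightarrow> int \<Rightarrow> nat \<Rightarrow> int" where
  "teich_seq p a = (\<lambda>n. (a ^ (p ^ n)) mod int p ^ n)"

lemma teich_seq_step:
  assumes "prime p" "coprime a (int p)"
  shows "[a ^ (p ^ Suc n) = a ^ (p ^ n)] (mod int p ^ Suc n)"
proof (induction n)
  case 0 then show ?case using fermat_int[OF assms] by simp
next
  case (Suc n)
  have "[(a ^ (p ^ Suc n)) ^ p = (a ^ (p ^ n)) ^ p] (mod int p ^ Suc (Suc n))"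
    by (rule pow_lift[OF assms(1) _ Suc]) simp
  then show ?case by (simp add: power_mult[symmetric] mult.commute)
qed

lemma teich_seq_props:
  assumes "prime p" "coprime a (int p)"
  shows "teich_seq p a \<in> carrier (padic_ints p)"
    and "teich_seq p a [^]\<^bsub>padic_ints p\<^esub> (p - 1) = \<one>\<^bsub>padic_ints p\<^esub>"
    and "teich_seq p a 1 = a mod int p"
proof -
  have p0: "p > 0" using prime_gt_0_nat[OF assms(1)] .
  show c: "teich_seq p a \<in> carrier (padic_ints p)"
    unfolding teich_seq_def
  proof (rule zp_modI[OF p0])
    fix n
    have "[a ^ (p ^ Suc n) = a ^ (p ^ n)] (mod int p ^ n)"
      by (rule cong_dvd_modulus[OF teich_seq_step[OF assms]]) (simp add: le_imp_power_dvd)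
    then show "a ^ p ^ Suc n mod int p ^ n = a ^ p ^ n mod int p ^ n" by (simp add: cong_def)
  qed
  show "teich_seq p a [^]\<^bsub>padic_ints p\<^esub> (p - 1) = \<one>\<^bsub>padic_ints p\<^esub>"
    unfolding zp_pow_comp[OF p0 c] zp_simps
  proof (rule ext)
    fix n
    show "teich_seq p a n ^ (p - 1) mod int p ^ n = 1 mod int p ^ n"
    proof (cases "n = 0")
      case True then show ?thesis by simp
    next
      case False
      have tot: "totient (p ^ n) = p ^ (n - 1) * (p - 1)"
        using totient_prime_power[OF assms(1)] False by simp
      have cop: "coprime a (int (p ^ n))" using assms(2) by simp
      have e: "[a ^ totient (p ^ n) = 1] (mod int (p ^ n))" by (rule euler_int[OF cop]) (simp add: p0)
      have "[(a ^ totient (p ^ n)) ^ p = 1 ^ p] (mod int (p ^ n))" by (rule cong_pow[OF e])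
      moreover have "(a ^ totient (p ^ n)) ^ p = (a ^ (p ^ n)) ^ (p - 1)"
      proof -
        have "p ^ n = p ^ (n - 1) * p" using False by (metis Suc_pred' neq0_conv power_Suc2)
        then show ?thesis unfolding tot power_mult[symmetric] by (simp add: ac_simps)
      qed
      ultimately have "[(a ^ (p ^ n)) ^ (p - 1) = 1] (mod int p ^ n)" by simp
      then show ?thesis unfolding teich_seq_def
        by (simp add: cong_def power_mod)
    qed
  qed
  show "teich_seq p a 1 = a mod int p"
    using fermat_int[OF assms] unfolding teich_seq_def by (simp add: cong_def)
qed

lemma zp_root_unique:
  assumes "prime p" "x \<in> carrier (padic_ints p)" "y \<in> carrier (padic_ints p)"
    "x [^]\<^bsub>padic_ints p\<^esub> (p - 1) = \<one>\<^bsub>padic_ints p\<^esub>"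
    "y [^]\<^bsub>padic_ints p\<^esub> (p - 1) = \<one>\<^bsub>padic_ints p\<^esub>"
    "x 1 = y 1" "coprime (x 1) (int p)"
  shows "x = y"
proof (rule ext)
  fix n
  have p0: "p > 0" using prime_gt_0_nat[OF assms(1)] .
  have p1: "p \<ge> 2" using prime_ge_2_nat[OF assms(1)] .
  have xs: "x n mod int p ^ n = x n" "y n mod int p ^ n = y n"
    using zp_self_mod assms(2,3) by blast+
  have "(x n) ^ (p - 1) mod int p ^ n = 1 mod int p ^ n"
    using fun_cong[OF assms(4)[unfolded zp_pow_comp[OF p0 assms(2)] zp_simps], of n] by simp
  moreover have "(y n) ^ (p - 1) mod int p ^ n = 1 mod int p ^ n"
    using fun_cong[OF assms(5)[unfolded zp_pow_comp[OF p0 assms(3)] zp_simps], of n] by simp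
  ultimately have pxy: "[x n ^ (p - 1) = y n ^ (p - 1)] (mod int p ^ n)" by (simp add: cong_def)
  show "x n = y n"
  proof (cases "n = 0")
    case True
    then show ?thesis using xs by simp
  next
    case False
    have x1: "x n mod int p = x 1" "y n mod int p = y 1"
      using zp_comp1_mod assms(2,3) False by auto
    have xyp: "[x n = y n] (mod int p)" using x1 assms(6) by (simp add: cong_def)
    have "coprime (y n mod int p) (int p)" using x1 assms(6,7) by simp
    then have cy: "coprime (y n) (int p)" using p0 by simp
    define m where "m = p - 2"
    have pm: "p - 1 = Suc m" using p1 unfolding m_def by simp
    define S where "S = (\<Sum>q<Suc m. x n ^ q * y n ^ (m - q))"
    have d: "x n ^ (p - 1) - y n ^ (p - 1) = (x n - y n) * S"
      unfolding pm S_def by (rule diff_power_eq_sum)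
    have c1: "[S = (\<Sum>q<Suc m. y n ^ q * y n ^ (m - q))] (mod int p)"
      unfolding S_def by (intro cong_sum cong_mult cong_pow xyp cong_refl)
    have "(\<Sum>q<Suc m. y n ^ q * y n ^ (m - q)) = (\<Sum>q<Suc m. y n ^ m)"
      by (intro sum.cong refl) (simp add: power_add[symmetric])
    also have "\<dots> = int (p - 1) * y n ^ m" using pm by simp
    finally have c2: "[S = int (p - 1) * y n ^ m] (mod int p)" using c1 by simp
    have "coprime (int p - 1) (int p)" by (rule coprime_diff_one_left)
    moreover have "int (p - 1) = int p - 1" using p0 by simp
    ultimately have "coprime (int (p - 1) * y n ^ m) (int p)" using cy by simp
    then have cS: "coprime S (int p)"
      using cong_imp_coprime[OF cong_sym[OF c2]] by blast
    then have cS': "coprime (int p ^ n) S" by (simp add: coprime_commute)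
    have "int p ^ n dvd (x n - y n) * S"
      using pxy d by (simp add: cong_iff_dvd_diff)
    then have "int p ^ n dvd (x n - y n)"
      using coprime_dvd_mult_left_iff[OF cS'] by blast
    then have "x n mod int p ^ n = y n mod int p ^ n" by (simp add: mod_eq_dvd_iff)
    then show ?thesis using xs by simp
  qed
qed

definition teich_spec :: "nat \<Rightarrow> int \<Rightarrow> (nat \<Rightarrow> int) \<Rightarrow> bool" where
  "teich_spec p a x \<longleftrightarrow> x \<in> carrier (padic_ints p) \<and> x [^]\<^bsub>padic_ints p\<^esub> (p - 1) = \<one>\<^bsub>padic_ints p\<^esub>
              \<and> x 1 = a mod int p"

lemma teich_spec_unique:
  assumes "prime p" "coprime a (int p)" "teich_spec p a x" "teich_spec p a y"
  shows "x = y"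
proof -
  have "coprime (x 1) (int p)" using assms(2,3) unfolding teich_spec_def
    by (metis coprime_mod_left_iff of_nat_eq_0_iff prime_gt_0_nat[OF assms(1)] less_irrefl)
  then show ?thesis using zp_root_unique[OF assms(1)] assms(3,4) unfolding teich_spec_def by metis
qed

lemma teich_spec:
  assumes "prime p" "coprime a (int p)"
  shows "teich_spec p a (teichmuller p a)"
proof -
  have ex: "teich_spec p a (teich_seq p a)" using teich_seq_props[OF assms] unfolding teich_spec_def by blast
  have "teichmuller p a = (THE x. teich_spec p a x)"
    using assms(2) unfolding teichmuller_def teich_spec_def by simp
  moreover have "teich_spec p a (THE x. teich_spec p a x)"
    by (rule theI[of "teich_spec p a", OF ex]) (use teich_spec_unique[OF assms] ex in blast)
  ultimately show ?thesis by simp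
qed

lemma teich_eqI:
  assumes "prime p" "coprime a (int p)" "teich_spec p a x"
  shows "teichmuller p a = x"
  using teich_spec_unique[OF assms(1,2) teich_spec[OF assms(1,2)] assms(3)] .

lemma teich_carrier: "prime p \<Longrightarrow> coprime a (int p) \<Longrightarrow> teichmuller p a \<in> carrier (padic_ints p)"
  using teich_spec unfolding teich_spec_def by blast

lemma teich_pow: "prime p \<Longrightarrow> coprime a (int p) \<Longrightarrow>
   teichmuller p a [^]\<^bsub>padic_ints p\<^esub> (p - 1) = \<one>\<^bsub>padic_ints p\<^esub>"
  using teich_spec unfolding teich_spec_def by blast

lemma teich_comp1: "prime p \<Longrightarrow> coprime a (int p) \<Longrightarrow> teichmuller p a 1 = a mod int p"
  using teich_spec unfolding teich_spec_def by blast

lemma teich_noncop: "\<not> coprime a (int p) \<Longrightarrow> teichmuller p a = \<zero>\<^bsub>padic_ints p\<^esub>"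
  unfolding teichmuller_def by simp

lemma teich_cong:
  assumes "[a = b] (mod int p)"
  shows "teichmuller p a = teichmuller p b"
proof -
  have "coprime a (int p) \<longleftrightarrow> coprime b (int p)" using assms cong_imp_coprime cong_sym by blast
  moreover have "a mod int p = b mod int p" using assms by (simp add: cong_def)
  ultimately show ?thesis unfolding teichmuller_def by simp
qed

lemma teich_mult:
  assumes "prime p" "coprime a (int p)" "coprime b (int p)"
  shows "teichmuller p (a * b) = teichmuller p a \<otimes>\<^bsub>padic_ints p\<^esub> teichmuller p b"
proof (rule teich_eqI[OF assms(1)])
  show "coprime (a * b) (int p)" using assms by simp
  interpret R: cring "padic_ints p" by (rule zp_cring[OF prime_gt_0_nat[OF assms(1)]])
  have ca: "teichmuller p a \<in> carrier (padic_ints p)" "teichmuller p b \<in> carrier (padic_ints p)"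
    using teich_carrier assms by blast+
  show "teich_spec p (a * b) (teichmuller p a \<otimes>\<^bsub>padic_ints p\<^esub> teichmuller p b)"
    unfolding teich_spec_def
  proof (intro conjI)
    show "teichmuller p a \<otimes>\<^bsub>padic_ints p\<^esub> teichmuller p b \<in> carrier (padic_ints p)" using ca by simp
    show "(teichmuller p a \<otimes>\<^bsub>padic_ints p\<^esub> teichmuller p b) [^]\<^bsub>padic_ints p\<^esub> (p - 1) = \<one>\<^bsub>padic_ints p\<^esub>"
      using ca teich_pow[OF assms(1,2)] teich_pow[OF assms(1,3)] by (simp add: R.nat_pow_distrib)
    show "(teichmuller p a \<otimes>\<^bsub>padic_ints p\<^esub> teichmuller p b) 1 = a * b mod int p"
      unfolding zp_simps using teich_comp1[OF assms(1,2)] teich_comp1[OF assms(1,3)]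
      by (simp add: mod_mult_eq)
  qed
qed

lemma teich_unit:
  assumes "prime p" "coprime a (int p)"
  shows "teichmuller p a \<in> Units (padic_ints p)"
proof (rule zp_unitI[OF assms(1) teich_carrier[OF assms]])
  have "coprime (a mod int p) (int p)" using assms(2) prime_gt_0_nat[OF assms(1)] by simp
  then show "coprime (teichmuller p a 1) (int p)" using teich_comp1[OF assms] by simp
qed

lemma teich_one:
  assumes "prime p" shows "teichmuller p 1 = \<one>\<^bsub>padic_ints p\<^esub>"
proof (rule teich_eqI[OF assms])
  interpret R: cring "padic_ints p" by (rule zp_cring[OF prime_gt_0_nat[OF assms(1)]])
  show "coprime 1 (int p)" by simp
  have "\<one>\<^bsub>padic_ints p\<^esub> 1 = 1 mod int p" by (simp add: zp_simps)
  then show "teich_spec p 1 \<one>\<^bsub>padic_ints p\<^esub>" unfolding teich_spec_def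
    by simp
qed


locale zpl =
  fixes p :: nat
  assumes prime: "prime p" and odd: "odd p"
begin

lemma p0: "p > 0" using prime_gt_0_nat[OF prime] .
lemma p2: "p \<ge> 2" using prime_ge_2_nat[OF prime] .
lemma p3: "p \<ge> 3" using p2 odd by (cases "p = 2") auto

sublocale R: cring "padic_ints p" by (rule zp_cring[OF p0])

abbreviation w :: "int \<Rightarrow> nat \<Rightarrow> int" where "w \<equiv> teichmuller p"

definition pw :: "int \<Rightarrow> int \<Rightarrow> nat \<Rightarrow> int" where
  "pw x k = w x [^]\<^bsub>padic_ints p\<^esub> nat (k mod int (p - 1))"

lemma w_carrier: "coprime x (int p) \<Longrightarrow> w x \<in> carrier (padic_ints p)"
  using teich_carrier[OF prime] .

lemma pw_carrier: "coprime x (int p) \<Longrightarrow> pw x k \<in> carrier (padic_ints p)"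
  unfolding pw_def using w_carrier by simp

lemma w_pow_mod:
  assumes "coprime x (int p)"
  shows "w x [^]\<^bsub>padic_ints p\<^esub> n = w x [^]\<^bsub>padic_ints p\<^esub> (n mod (p - 1))"
proof -
  have c: "w x \<in> carrier (padic_ints p)" using w_carrier[OF assms] .
  have "w x [^]\<^bsub>padic_ints p\<^esub> n = w x [^]\<^bsub>padic_ints p\<^esub> ((p - 1) * (n div (p - 1)) + n mod (p - 1))"
    by simp
  also have "\<dots> =
      w x [^]\<^bsub>padic_ints p\<^esub> ((p - 1) * (n div (p - 1))) \<otimes>\<^bsub>padic_ints p\<^esub> w x [^]\<^bsub>padic_ints p\<^esub> (n mod (p - 1))"
    by (rule R.nat_pow_mult[symmetric, OF c])
  finally have "w x [^]\<^bsub>padic_ints p\<^esub> n =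
      w x [^]\<^bsub>padic_ints p\<^esub> ((p - 1) * (n div (p - 1))) \<otimes>\<^bsub>padic_ints p\<^esub> w x [^]\<^bsub>padic_ints p\<^esub> (n mod (p - 1))" .
  also have "w x [^]\<^bsub>padic_ints p\<^esub> ((p - 1) * (n div (p - 1))) = \<one>\<^bsub>padic_ints p\<^esub>"
    using R.nat_pow_pow[OF c, symmetric] teich_pow[OF prime assms] by simp
  finally show ?thesis using c by simp
qed

lemma pw_nat: "coprime x (int p) \<Longrightarrow> pw x (int n) = w x [^]\<^bsub>padic_ints p\<^esub> n"
proof -
  assume a: "coprime x (int p)"
  have "nat (int n mod int (p - 1)) = n mod (p - 1)"
    by (metis nat_int of_nat_mod)
  then show ?thesis unfolding pw_def using w_pow_mod[OF a, of n] by simp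
qed

lemma pw_exp_cong: "[k = l] (mod int (p - 1)) \<Longrightarrow> pw x k = pw x l"
  unfolding pw_def cong_def by simp

lemma pw_add:
  assumes "coprime x (int p)"
  shows "pw x k \<otimes>\<^bsub>padic_ints p\<^esub> pw x l = pw x (k + l)"
proof -
  have c: "w x \<in> carrier (padic_ints p)" using w_carrier[OF assms] .
  have pos: "0 \<le> k mod int (p - 1)" "0 \<le> l mod int (p - 1)" using p2 by simp_all
  have "pw x k \<otimes>\<^bsub>padic_ints p\<^esub> pw x l =
      w x [^]\<^bsub>padic_ints p\<^esub> (nat (k mod int (p - 1)) + nat (l mod int (p - 1)))"
    unfolding pw_def using R.nat_pow_mult[OF c] by simp
  also have "\<dots> = pw x (int (nat (k mod int (p - 1)) + nat (l mod int (p - 1))))"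
    by (rule pw_nat[OF assms, symmetric])
  also have "\<dots> = pw x (k + l)"
    by (rule pw_exp_cong) (use pos in \<open>simp add: cong_def mod_add_eq\<close>)
  finally show ?thesis .
qed

lemma pw_zero: "coprime x (int p) \<Longrightarrow> pw x 0 = \<one>\<^bsub>padic_ints p\<^esub>"
  unfolding pw_def by simp

lemma pw_inv:
  assumes "coprime x (int p)"
  shows "pw x k \<otimes>\<^bsub>padic_ints p\<^esub> pw x (- k) = \<one>\<^bsub>padic_ints p\<^esub>"
  using pw_add[OF assms, of k "-k"] pw_zero[OF assms] by simp

lemma pw_inv': "coprime x (int p) \<Longrightarrow> pw x (- k) \<otimes>\<^bsub>padic_ints p\<^esub> pw x k = \<one>\<^bsub>padic_ints p\<^esub>"
  using pw_inv[of x "-k"] by simp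

lemma pw_unit: "coprime x (int p) \<Longrightarrow> pw x k \<in> Units (padic_ints p)"
proof -
  assume a: "coprime x (int p)"
  show ?thesis unfolding Units_def using pw_carrier[OF a, of k] pw_carrier[OF a, of "-k"] pw_inv[OF a, of k] pw_inv'[OF a, of k]
    by blast
qed

lemma pw_inv_eq: "coprime x (int p) \<Longrightarrow> inv\<^bsub>padic_ints p\<^esub> (pw x k) = pw x (- k)"
proof -
  assume a: "coprime x (int p)"
  show ?thesis using R.inv_unique'[OF pw_carrier[OF a, of k] pw_carrier[OF a, of "-k"] pw_inv[OF a, of k] pw_inv'[OF a, of k]]
    by simp
qed

lemma pw_mult:
  assumes "coprime x (int p)" "coprime y (int p)"
  shows "pw (x * y) k = pw x k \<otimes>\<^bsub>padic_ints p\<^esub> pw y k"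
  unfolding pw_def teich_mult[OF prime assms]
  by (rule R.nat_pow_distrib) (use w_carrier assms in auto)

lemma pw_cong: "[x = y] (mod int p) \<Longrightarrow> pw x k = pw y k"
proof -
  assume "[x = y] (mod int p)"
  then have "w x = w y" by (rule teich_cong)
  then show ?thesis unfolding pw_def by simp
qed

lemma pw_one: "pw 1 k = \<one>\<^bsub>padic_ints p\<^esub>"
  unfolding pw_def teich_one[OF prime] by simp

lemma pw_pow:
  assumes "coprime x (int p)"
  shows "pw (x ^ n) k = pw x (int n * k)"
proof (induction n)
  case 0 then show ?case using pw_one pw_zero[OF assms] by simp
next
  case (Suc n)
  have "pw (x ^ Suc n) k = pw x k \<otimes>\<^bsub>padic_ints p\<^esub> pw (x ^ n) k"
    using pw_mult[OF assms, of "x ^ n"] assms by simp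
  also have "\<dots> = pw x (k + int n * k)" using Suc pw_add[OF assms] by simp
  finally show ?case by (simp add: algebra_simps)
qed

lemma pw_pow_exp:
  assumes "coprime x (int p)"
  shows "pw x k [^]\<^bsub>padic_ints p\<^esub> (n::nat) = pw x (int n * k)"
proof (induction n)
  case 0 then show ?case using pw_zero[OF assms] by simp
next
  case (Suc n)
  then show ?case using pw_add[OF assms, of "int n * k" k] by (simp add: algebra_simps)
qed

lemma pw_comp1:
  assumes "coprime x (int p)" "0 \<le> k" "k < int (p - 1)"
  shows "pw x k 1 = x ^ nat k mod int p"
proof -
  have "pw x k = w x [^]\<^bsub>padic_ints p\<^esub> nat k" unfolding pw_def using assms(2,3) by simp
  also have "\<dots> = (\<lambda>n. (w x n) ^ nat k mod int p ^ n)" by (rule zp_pow_comp[OF p0 w_carrier[OF assms(1)]])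
  finally have "pw x k 1 = (w x 1) ^ nat k mod int p" by simp
  also have "\<dots> = x ^ nat k mod int p" using teich_comp1[OF prime assms(1)] by (simp add: power_mod)
  finally show ?thesis .
qed

lemma pw_neg1_even: "pw (-1) (2 * j) = \<one>\<^bsub>padic_ints p\<^esub>"
proof -
  have "pw ((-1) ^ 2) j = pw (-1) (int 2 * j)" by (rule pw_pow) simp
  then show ?thesis using pw_one by simp
qed

lemma pw_at_one: "[x = 1] (mod int p) \<Longrightarrow> pw x k = \<one>\<^bsub>padic_ints p\<^esub>"
  using pw_cong[of x 1 k] pw_one by simp

definition chi :: "int \<Rightarrow> int \<Rightarrow> nat \<Rightarrow> int" where
  "chi k = (\<lambda>a. if coprime a (int p) then pw a k else \<zero>\<^bsub>padic_ints p\<^esub>)"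

lemma coprime_cong_p: "[a = b] (mod int p) \<Longrightarrow> coprime a (int p) \<longleftrightarrow> coprime b (int p)"
  using cong_imp_coprime cong_sym by blast

lemma chi_is_char: "is_char p p (chi k)"
  unfolding is_char_def
proof (intro conjI allI impI)
  fix a b :: int assume "[a = b] (mod int p)"
  then show "chi k a = chi k b" unfolding chi_def using coprime_cong_p pw_cong by metis
next
  fix a :: int assume "coprime a (int p)"
  then show "chi k a \<in> Units (padic_ints p)" unfolding chi_def using pw_unit by simp
next
  fix a :: int assume "\<not> coprime a (int p)"
  then show "chi k a = \<zero>\<^bsub>padic_ints p\<^esub>" unfolding chi_def by simp
next
  fix a b :: int assume "coprime a (int p)" "coprime b (int p)"
  then show "chi k (a * b) = chi k a \<otimes>\<^bsub>padic_ints p\<^esub> chi k b"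
    unfolding chi_def using pw_mult by simp
qed

lemma chi_in_group: "chi k \<in> char_group p p"
  unfolding char_group_def using chi_is_char by simp

lemma omega2_eq: "char_mult p p (teichmuller p) (teichmuller p) = chi 2"
proof (rule ext)
  fix a
  show "char_mult p p (teichmuller p) (teichmuller p) a = chi 2 a"
  proof (cases "coprime a (int p)")
    case True
    have "pw a (int 2) = w a [^]\<^bsub>padic_ints p\<^esub> (2::nat)" by (rule pw_nat[OF True])
    also have "\<dots> = w a \<otimes>\<^bsub>padic_ints p\<^esub> w a" using w_carrier[OF True]
      by (simp add: numeral_2_eq_2)
    finally show ?thesis unfolding char_mult_def chi_def using True by simp
  next
    case False then show ?thesis unfolding char_mult_def chi_def by simp
  qed
qed

lemma char_inv_chi: "char_inv p p (chi k) = chi (- k)"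
  unfolding char_inv_def chi_def using pw_inv_eq by (auto intro!: ext)

lemma char_mult_chi: "char_mult p p (chi k) (chi l) = chi (k + l)"
  unfolding char_mult_def chi_def using pw_add by (auto intro!: ext)

lemma primroot_ex:
  obtains g :: nat where "coprime (int g) (int p)"
    "\<And>a. coprime a (int p) \<Longrightarrow> \<exists>i<p - 1. [int g ^ i = a] (mod int p)"
    "\<And>i j. i < p - 1 \<Longrightarrow> j < p - 1 \<Longrightarrow> [int g ^ i = int g ^ j] (mod int p) \<Longrightarrow> i = j"
proof -
  obtain g where g: "residue_primroot p g" using prime_primitive_root_exists[OF _ prime] p2 by force
  have p1: "p > 1" using p2 by simp
  have tot: "totient p = p - 1" using totient_prime[OF prime] .
  have bij: "bij_betw (\<lambda>i. g ^ i mod p) {..<p - 1} (totatives p)"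
    using residue_primroot_is_generator[OF p1 g] tot by simp
  have cg: "coprime (int g) (int p)" using g unfolding residue_primroot_def by (simp add: coprime_commute)
  show ?thesis
  proof (rule that[OF cg])
    fix a :: int assume a: "coprime a (int p)"
    define b where "b = nat (a mod int p)"
    have ib: "int b = a mod int p" unfolding b_def using p0 by simp
    have "coprime (int b) (int p)" using ib a p0 by simp
    then have cb: "coprime b p" by simp
    have "b \<noteq> 0"
    proof
      assume "b = 0"
      then have "p = 1" using cb by simp
      then show False using p1 by simp
    qed
    moreover have "a mod int p < int p" using p0 by simp
    then have "b \<le> p" using ib by linarith
    ultimately have "b \<in> totatives p" using cb unfolding totatives_def by simp
    then have "b \<in> (\<lambda>i. g ^ i mod p) ` {..<p - 1}" using bij unfolding bij_betw_def by simp
    then obtain i where i: "i < p - 1" "g ^ i mod p = b" by auto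
    have "int (g ^ i mod p) = int g ^ i mod int p" by (simp add: of_nat_mod)
    then have "int g ^ i mod int p = a mod int p" using i(2) ib by simp
    then show "\<exists>i<p - 1. [int g ^ i = a] (mod int p)" using i(1) by (auto simp: cong_def)
  next
    fix i j assume ij: "i < p - 1" "j < p - 1" "[int g ^ i = int g ^ j] (mod int p)"
    then have "[int (g ^ i) = int (g ^ j)] (mod int p)" by simp
    then have "[g ^ i = g ^ j] (mod p)" by (simp only: cong_int_iff)
    then have "g ^ i mod p = g ^ j mod p" by (simp add: cong_def)
    then show "i = j" using bij ij unfolding bij_betw_def inj_on_def by auto
  qed
qed

lemma char_one:
  assumes "is_char p p \<chi>"
  shows "\<chi> 1 = \<one>\<^bsub>padic_ints p\<^esub>"
proof -
  have u: "\<chi> 1 \<in> Units (padic_ints p)" using assms unfolding is_char_def by simp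
  have "\<chi> (1 * 1) = \<chi> 1 \<otimes>\<^bsub>padic_ints p\<^esub> \<chi> 1" using assms unfolding is_char_def
    by (meson coprime_1_left)
  then have "\<chi> 1 \<otimes>\<^bsub>padic_ints p\<^esub> \<one>\<^bsub>padic_ints p\<^esub> = \<chi> 1 \<otimes>\<^bsub>padic_ints p\<^esub> \<chi> 1"
    using u by auto
  then have "\<one>\<^bsub>padic_ints p\<^esub> = \<chi> 1" using R.Units_l_cancel[OF u R.one_closed] u by blast
  then show ?thesis by simp
qed

lemma char_pow:
  assumes "is_char p p \<chi>" "coprime a (int p)"
  shows "\<chi> (a ^ n) = \<chi> a [^]\<^bsub>padic_ints p\<^esub> n"
proof (induction n)
  case 0 then show ?case using char_one[OF assms(1)] by simp
next
  case (Suc n)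
  have "coprime (a ^ n) (int p)" using assms(2) by simp
  then have "\<chi> (a ^ n * a) = \<chi> (a ^ n) \<otimes>\<^bsub>padic_ints p\<^esub> \<chi> a"
    using assms unfolding is_char_def by blast
  then have "\<chi> (a ^ Suc n) = \<chi> (a ^ n) \<otimes>\<^bsub>padic_ints p\<^esub> \<chi> a" by (simp add: mult.commute)
  then show ?case using Suc by simp
qed

lemma char_is_chi:
  assumes "is_char p p \<chi>"
  shows "\<exists>m. 0 \<le> m \<and> m < int (p - 1) \<and> (\<forall>a. coprime a (int p) \<longrightarrow> \<chi> a = pw a m)"
proof -
  obtain g :: nat where g: "coprime (int g) (int p)"
    "\<And>a. coprime a (int p) \<Longrightarrow> \<exists>i<p - 1. [int g ^ i = a] (mod int p)"
    using primroot_ex by metis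
  have per: "\<And>a b. [a = b] (mod int p) \<Longrightarrow> \<chi> a = \<chi> b" using assms unfolding is_char_def by blast
  have ug: "\<chi> (int g) \<in> Units (padic_ints p)" using assms g(1) unfolding is_char_def by blast
  then have cgc: "\<chi> (int g) \<in> carrier (padic_ints p)" by blast
  define c where "c = \<chi> (int g) 1"
  have cc: "coprime c (int p)" unfolding c_def by (rule zp_unitD[OF prime ug])
  have "[int g ^ (p - 1) = 1] (mod int p)"
    using euler_int[OF g(1) p0] totient_prime[OF prime] by simp
  then have "\<chi> (int g ^ (p - 1)) = \<chi> 1" by (rule per)
  then have "\<chi> (int g) [^]\<^bsub>padic_ints p\<^esub> (p - 1) = \<one>\<^bsub>padic_ints p\<^esub>"
    using char_pow[OF assms g(1), of "p - 1"] char_one[OF assms] by simp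
  moreover have "\<chi> (int g) 1 = c mod int p"
  proof -
    have "0 \<le> \<chi> (int g) 1" "\<chi> (int g) 1 < int p ^ 1" using cgc unfolding zp_carrier_iff by blast+
    then have "0 \<le> c" "c < int p" unfolding c_def by simp_all
    then show ?thesis unfolding c_def by simp
  qed
  ultimately have "teich_spec p c (\<chi> (int g))" unfolding teich_spec_def using cgc by simp
  then have chig: "\<chi> (int g) = w c" using teich_eqI[OF prime cc] by simp
  obtain i where i: "i < p - 1" "[int g ^ i = c] (mod int p)" using g(2)[OF cc] by blast
  have "w c = pw c 1" using pw_nat[OF cc, of 1] w_carrier[OF cc] by simp
  also have "\<dots> = pw (int g ^ i) 1" using pw_cong[OF cong_sym[OF i(2)]] by simp
  also have "\<dots> = pw (int g) (int i)" using pw_pow[OF g(1)] by simp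
  finally have chig2: "\<chi> (int g) = pw (int g) (int i)" using chig by simp
  show ?thesis
  proof (intro exI conjI allI impI)
    show "0 \<le> int i" "int i < int (p - 1)" using i by auto
    fix a assume a: "coprime a (int p)"
    obtain j where j: "j < p - 1" "[int g ^ j = a] (mod int p)" using g(2)[OF a] by blast
    have "\<chi> a = \<chi> (int g ^ j)" using per[OF cong_sym[OF j(2)]] .
    also have "\<dots> = pw (int g) (int i) [^]\<^bsub>padic_ints p\<^esub> j" using char_pow[OF assms g(1)] chig2 by simp
    also have "\<dots> = pw (int g) (int j * int i)" using pw_pow_exp[OF g(1)] by simp
    also have "\<dots> = pw (int g ^ j) (int i)" using pw_pow[OF g(1)] by simp
    also have "\<dots> = pw a (int i)" using pw_cong[OF j(2)] by simp
    finally show "\<chi> a = pw a (int i)" .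
  qed
qed

lemma chi_distinct:
  assumes "0 \<le> k" "k < int (p - 1)" "0 \<le> l" "l < int (p - 1)" "chi k = chi l"
  shows "k = l"
proof -
  obtain g :: nat where g: "coprime (int g) (int p)"
    "\<And>i j. i < p - 1 \<Longrightarrow> j < p - 1 \<Longrightarrow> [int g ^ i = int g ^ j] (mod int p) \<Longrightarrow> i = j"
    using primroot_ex by metis
  have "pw (int g) k = pw (int g) l" using fun_cong[OF assms(5), of "int g"] g(1) unfolding chi_def by simp
  then have "pw (int g) k 1 = pw (int g) l 1" by simp
  then have "int g ^ nat k mod int p = int g ^ nat l mod int p"
    using pw_comp1[OF g(1)] assms(1-4) by simp
  then have "nat k = nat l" using g(2)[of "nat k" "nat l"] assms(1-4) by (simp add: cong_def)
  then show ?thesis using assms by simp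
qed

end


locale zph = zpl p for p :: nat +
  fixes smul :: "(nat \<Rightarrow> int) \<Rightarrow> 'h \<Rightarrow> 'h::ab_group_add"
    and dia :: "int \<Rightarrow> 'h \<Rightarrow> 'h"
    and msym :: "int \<Rightarrow> int \<Rightarrow> 'h"
  assumes ms: "modsym_space p p smul dia msym"
begin

lemma zpm: "zp_module p smul" using ms unfolding modsym_space_def by blast

lemma smul_addl: "x \<in> carrier (padic_ints p) \<Longrightarrow> y \<in> carrier (padic_ints p) \<Longrightarrow>
    smul (x \<oplus>\<^bsub>padic_ints p\<^esub> y) v = smul x v + smul y v"
  using zpm unfolding zp_module_def by blast

lemma smul_mult: "x \<in> carrier (padic_ints p) \<Longrightarrow> y \<in> carrier (padic_ints p) \<Longrightarrow>
    smul (x \<otimes>\<^bsub>padic_ints p\<^esub> y) v = smul x (smul y v)"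
  using zpm unfolding zp_module_def by blast

lemma smul_addr: "x \<in> carrier (padic_ints p) \<Longrightarrow> smul x (v + u) = smul x v + smul x u"
  using zpm unfolding zp_module_def by blast

lemma smul_one: "smul \<one>\<^bsub>padic_ints p\<^esub> v = v"
  using zpm unfolding zp_module_def by blast

lemma smul_zerol: "smul \<zero>\<^bsub>padic_ints p\<^esub> v = 0"
proof -
  have "smul (\<zero>\<^bsub>padic_ints p\<^esub> \<oplus>\<^bsub>padic_ints p\<^esub> \<zero>\<^bsub>padic_ints p\<^esub>) v = smul \<zero>\<^bsub>padic_ints p\<^esub> v + smul \<zero>\<^bsub>padic_ints p\<^esub> v"
    by (rule smul_addl) simp_all
  then show ?thesis by simp
qed

lemma smul_zeror: "x \<in> carrier (padic_ints p) \<Longrightarrow> smul x 0 = 0"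
  using smul_addr[of x 0 0] by simp

lemma smul_negl: "x \<in> carrier (padic_ints p) \<Longrightarrow> smul (\<ominus>\<^bsub>padic_ints p\<^esub> x) v = - smul x v"
proof -
  assume x: "x \<in> carrier (padic_ints p)"
  have "smul (\<ominus>\<^bsub>padic_ints p\<^esub> x \<oplus>\<^bsub>padic_ints p\<^esub> x) v = smul (\<ominus>\<^bsub>padic_ints p\<^esub> x) v + smul x v"
    by (rule smul_addl) (use x in simp_all)
  then have "smul (\<ominus>\<^bsub>padic_ints p\<^esub> x) v + smul x v = 0" using x smul_zerol by (simp add: R.l_neg)
  then show ?thesis by (simp add: eq_neg_iff_add_eq_0)
qed

lemma smul_minusl: "x \<in> carrier (padic_ints p) \<Longrightarrow> y \<in> carrier (padic_ints p) \<Longrightarrow>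
    smul (x \<ominus>\<^bsub>padic_ints p\<^esub> y) v = smul x v - smul y v"
  unfolding R.minus_eq by (simp add: smul_addl smul_negl)

lemma smul_negr: "x \<in> carrier (padic_ints p) \<Longrightarrow> smul x (- v) = - smul x v"
  using smul_addr[of x v "- v"] smul_zeror by (simp add: eq_neg_iff_add_eq_0 add.commute)

lemma smul_diffr: "x \<in> carrier (padic_ints p) \<Longrightarrow> smul x (v - u) = smul x v - smul x u"
  using smul_addr[of x v "- u"] smul_negr by simp

lemma smul_sumr: "x \<in> carrier (padic_ints p) \<Longrightarrow> smul x (\<Sum>i\<in>I. f i) = (\<Sum>i\<in>I. smul x (f i))"
proof (induction I rule: infinite_finite_induct)
  case (infinite A) then show ?case using smul_zeror by simp
next
  case empty then show ?case using smul_zeror by simp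
next
  case (insert i A) then show ?case using smul_addr by simp
qed

lemma smul_comm: "x \<in> carrier (padic_ints p) \<Longrightarrow> y \<in> carrier (padic_ints p) \<Longrightarrow>
    smul x (smul y v) = smul y (smul x v)"
proof -
  assume a: "x \<in> carrier (padic_ints p)" "y \<in> carrier (padic_ints p)"
  have "smul x (smul y v) = smul (x \<otimes>\<^bsub>padic_ints p\<^esub> y) v" using smul_mult[OF a] by simp
  also have "\<dots> = smul (y \<otimes>\<^bsub>padic_ints p\<^esub> x) v" using R.m_comm[OF a] by simp
  also have "\<dots> = smul y (smul x v)" using smul_mult[OF a(2) a(1)] by simp
  finally show ?thesis .
qed

lemma smul_unit_cancel:
  assumes "u \<in> Units (padic_ints p)" "smul u v = 0"
  shows "v = 0"
proof -
  have "v = smul (inv\<^bsub>padic_ints p\<^esub> u \<otimes>\<^bsub>padic_ints p\<^esub> u) v" using assms(1) smul_one by simp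
  also have "\<dots> = smul (inv\<^bsub>padic_ints p\<^esub> u) (smul u v)"
    using assms(1) smul_mult[of "inv\<^bsub>padic_ints p\<^esub> u" u v] R.Units_closed by simp
  finally show ?thesis using assms smul_zeror by simp
qed

lemma msym_per: "[u = u'] (mod int p) \<Longrightarrow> [v = v'] (mod int p) \<Longrightarrow> msym u v = msym u' v'"
  using ms unfolding modsym_space_def apply (elim conjE) by blast

lemma msym_anti: "unimodular p u v \<Longrightarrow> msym u v = - msym (- v) u"
  using ms unfolding modsym_space_def apply (elim conjE) by blast

lemma msym_three: "unimodular p u v \<Longrightarrow> msym u v = msym u (u + v) + msym (u + v) v"
  using ms unfolding modsym_space_def apply (elim conjE) by blast

lemma spanI:
  assumes "finite F" "F \<subseteq> S" "\<And>x. x \<in> F \<Longrightarrow> c x \<in> carrier (padic_ints p)" "v = (\<Sum>x\<in>F. smul (c x) x)"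
  shows "v \<in> zp_span p smul S"
  unfolding zp_span_def using assms by blast

lemma span_zero: "0 \<in> zp_span p smul S"
  by (rule spanI[of "{}" _ "\<lambda>_. \<one>\<^bsub>padic_ints p\<^esub>"]) simp_all

lemma span_gen: "x \<in> S \<Longrightarrow> x \<in> zp_span p smul S"
  by (rule spanI[of "{x}" _ "\<lambda>_. \<one>\<^bsub>padic_ints p\<^esub>"]) (simp_all add: smul_one)

lemma span_smul:
  assumes "c \<in> carrier (padic_ints p)" "v \<in> zp_span p smul S"
  shows "smul c v \<in> zp_span p smul S"
proof -
  obtain F d where F: "finite F" "F \<subseteq> S" "\<forall>x\<in>F. d x \<in> carrier (padic_ints p)" "v = (\<Sum>x\<in>F. smul (d x) x)"
    using assms(2) unfolding zp_span_def by blast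
  have eq: "smul c v = (\<Sum>x\<in>F. smul (c \<otimes>\<^bsub>padic_ints p\<^esub> d x) x)"
    unfolding F(4) using assms(1) F(3) by (simp add: smul_sumr smul_mult)
  show ?thesis by (rule spanI[OF F(1,2), of "\<lambda>x. c \<otimes>\<^bsub>padic_ints p\<^esub> d x"]) (use F(3) assms(1) eq in auto)
qed

lemma span_add:
  assumes "v \<in> zp_span p smul S" "u \<in> zp_span p smul S"
  shows "v + u \<in> zp_span p smul S"
proof -
  obtain F d where F: "finite F" "F \<subseteq> S" "\<forall>x\<in>F. d x \<in> carrier (padic_ints p)" "v = (\<Sum>x\<in>F. smul (d x) x)"
    using assms(1) unfolding zp_span_def by blast
  obtain G e where G: "finite G" "G \<subseteq> S" "\<forall>x\<in>G. e x \<in> carrier (padic_ints p)" "u = (\<Sum>x\<in>G. smul (e x) x)"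
    using assms(2) unfolding zp_span_def by blast
  define d' where "d' x = (if x \<in> F then d x else \<zero>\<^bsub>padic_ints p\<^esub>)" for x
  define e' where "e' x = (if x \<in> G then e x else \<zero>\<^bsub>padic_ints p\<^esub>)" for x
  have cd: "d' x \<in> carrier (padic_ints p)" "e' x \<in> carrier (padic_ints p)" for x
    unfolding d'_def e'_def using F(3) G(3) by auto
  have "v = (\<Sum>x\<in>F \<union> G. smul (d' x) x)"
    unfolding F(4) by (rule sum.mono_neutral_cong_left) (auto simp: F G d'_def smul_zerol)
  moreover have "u = (\<Sum>x\<in>F \<union> G. smul (e' x) x)"
    unfolding G(4) by (rule sum.mono_neutral_cong_left) (auto simp: F G e'_def smul_zerol)
  ultimately have eq: "v + u = (\<Sum>x\<in>F \<union> G. smul (d' x \<oplus>\<^bsub>padic_ints p\<^esub> e' x) x)"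
    by (simp add: sum.distrib smul_addl cd)
  show ?thesis by (rule spanI[of "F \<union> G" _ "\<lambda>x. d' x \<oplus>\<^bsub>padic_ints p\<^esub> e' x"]) (use F G cd eq in auto)
qed

lemma span_neg: "v \<in> zp_span p smul S \<Longrightarrow> - v \<in> zp_span p smul S"
  using span_smul[of "\<ominus>\<^bsub>padic_ints p\<^esub> \<one>\<^bsub>padic_ints p\<^esub>" v S] smul_negl[of "\<one>\<^bsub>padic_ints p\<^esub>"] smul_one
  by simp

lemma span_sum: "(\<And>i. i \<in> I \<Longrightarrow> f i \<in> zp_span p smul S) \<Longrightarrow> (\<Sum>i\<in>I. f i) \<in> zp_span p smul S"
proof (induction I rule: infinite_finite_induct)
  case (infinite A) then show ?case using span_zero by simp
next
  case empty then show ?case using span_zero by simp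
next
  case (insert i A) then show ?case using span_add by simp
qed

lemma span_mono: "S \<subseteq> T \<Longrightarrow> v \<in> zp_span p smul S \<Longrightarrow> v \<in> zp_span p smul T"
  unfolding zp_span_def by blast


end


context zph begin

lemma prime_int: "prime (int p)" using prime prime_nat_iff_prime[of "int p"] by simp

lemma orth_one:
  assumes "[x = 1] (mod int p)"
  shows "(\<Sum>k<p - 1. smul (w x [^]\<^bsub>padic_ints p\<^esub> k) v) = (\<Sum>k<p - 1. v)"
proof -
  have "w x = w 1" using teich_cong[OF assms] .
  then have "w x = \<one>\<^bsub>padic_ints p\<^esub>" using teich_one[OF prime] by simp
  then show ?thesis by (simp add: smul_one)
qed

lemma orth_ne:
  assumes "coprime x (int p)" "\<not> [x = 1] (mod int p)"
  shows "(\<Sum>k<p - 1. smul (w x [^]\<^bsub>padic_ints p\<^esub> k) v) = 0"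
proof -
  let ?R = "padic_ints p"
  define W where "W = w x"
  have Wc: "W \<in> carrier ?R" unfolding W_def using w_carrier[OF assms(1)] .
  define f where "f k = smul (W [^]\<^bsub>?R\<^esub> k) v" for k :: nat
  define V where "V = (\<Sum>k<p - 1. f k)"
  have fp: "f (p - 1) = f 0" unfolding f_def W_def using teich_pow[OF prime assms(1)] by simp
  have "smul W V = (\<Sum>k<p - 1. f (Suc k))"
    unfolding V_def f_def using Wc by (simp add: smul_sumr smul_mult[symmetric] R.m_comm)
  also have "\<dots> = (\<Sum>k<Suc (p - 1). f k) - f 0"
  proof -
    have sh: "(\<Sum>k<Suc (p - 1). f k) = f 0 + (\<Sum>k<p - 1. f (Suc k))" by (rule sum.lessThan_Suc_shift)
    show ?thesis by (simp only: sh) simp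
  qed
  also have "\<dots> = V" unfolding V_def using fp by simp
  finally have WV: "smul W V = V" .
  have u: "W \<ominus>\<^bsub>?R\<^esub> \<one>\<^bsub>?R\<^esub> \<in> Units ?R"
  proof (rule zp_unitI[OF prime])
    show "W \<ominus>\<^bsub>?R\<^esub> \<one>\<^bsub>?R\<^esub> \<in> carrier ?R" using Wc by simp
    have "(W \<ominus>\<^bsub>?R\<^esub> \<one>\<^bsub>?R\<^esub>) 1 = (W 1 + (- (1 mod int p)) mod int p) mod int p"
      unfolding R.minus_eq zp_minus_comp[OF p0 R.one_closed] by (simp add: zp_simps)
    also have "\<dots> = (x - 1) mod int p"
    proof -
      have o: "1 mod int p = 1" using p2 by simp
      show ?thesis unfolding W_def teich_comp1[OF prime assms(1)] o by (simp add: mod_add_eq)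
    qed
    finally have e: "(W \<ominus>\<^bsub>?R\<^esub> \<one>\<^bsub>?R\<^esub>) 1 = (x - 1) mod int p" .
    have "\<not> int p dvd (x - 1)" using assms(2) by (simp add: cong_iff_dvd_diff)
    then have "coprime (int p) (x - 1)" using prime_imp_coprime[OF prime_int] by blast
    then have "coprime ((x - 1) mod int p) (int p)" using p0 by (simp add: coprime_commute)
    then show "coprime ((W \<ominus>\<^bsub>?R\<^esub> \<one>\<^bsub>?R\<^esub>) 1) (int p)" using e by simp
  qed
  have "smul (W \<ominus>\<^bsub>?R\<^esub> \<one>\<^bsub>?R\<^esub>) V = 0" using WV Wc by (simp add: smul_minusl smul_one)
  then have "V = 0" using smul_unit_cancel[OF u] by blast
  then show ?thesis unfolding V_def f_def W_def .
qed

end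


context zph begin

definition U :: "int set" where "U = {a \<in> {0..<int p}. coprime a (int p)}"

lemma finU: "finite U" by (rule finite_subset[of _ "{0..<int p}"]) (auto simp: U_def)

lemma U_cop: "a \<in> U \<Longrightarrow> coprime a (int p)" unfolding U_def by simp

lemma U_mod: "coprime x (int p) \<Longrightarrow> x mod int p \<in> U"
  unfolding U_def using p0 by simp

lemma U_eq: "a \<in> U \<Longrightarrow> b \<in> U \<Longrightarrow> [a = b] (mod int p) \<Longrightarrow> a = b"
  unfolding U_def cong_def by simp

lemma fermat_p: "coprime x (int p) \<Longrightarrow> [x ^ (p - 1) = 1] (mod int p)"
  using euler_int[of x p] p0 totient_prime[OF prime] by simp

lemma pw_inv_pow:
  assumes "coprime x (int p)"
  shows "pw (x ^ (p - 2)) k = pw x (- k)"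
proof -
  have "pw (x ^ (p - 2)) k = pw x (int (p - 2) * k)" by (rule pw_pow[OF assms])
  also have "\<dots> = pw x (- k)"
  proof (rule pw_exp_cong)
    have "int (p - 2) * k - (- k) = int (p - 1) * k" using p2 by (simp add: algebra_simps of_nat_diff)
    then show "[int (p - 2) * k = - k] (mod int (p - 1))"
      by (simp add: cong_iff_dvd_diff)
  qed
  finally show ?thesis .
qed

lemma orth_pw:
  assumes "coprime X (int p)" "Y \<in> carrier (padic_ints p)"
  shows "(\<Sum>k<p - 1. smul (pw X (int k) \<otimes>\<^bsub>padic_ints p\<^esub> Y) v) =
     (if [X = 1] (mod int p) then (\<Sum>k<p - 1. smul Y v) else 0)"
proof -
  have "(\<Sum>k<p - 1. smul (pw X (int k) \<otimes>\<^bsub>padic_ints p\<^esub> Y) v) =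
        (\<Sum>k<p - 1. smul (w X [^]\<^bsub>padic_ints p\<^esub> k) (smul Y v))"
    by (intro sum.cong refl) (simp add: pw_nat[OF assms(1)] smul_mult assms w_carrier)
  then show ?thesis using orth_one orth_ne[OF assms(1)] by simp
qed

lemma collapse:
  assumes "coprime z (int p)" "b0 \<in> U" "[b0 * z = 1] (mod int p)"
  shows "(\<Sum>b\<in>U. if [b * z = 1] (mod int p) then F b else 0) = F b0"
proof -
  have "{b \<in> U. [b * z = 1] (mod int p)} \<subseteq> {b0}"
  proof
    fix b assume "b \<in> {b \<in> U. [b * z = 1] (mod int p)}"
    then have b: "b \<in> U" "[b * z = 1] (mod int p)" by auto
    then have "[b * z = b0 * z] (mod int p)" using assms(3) by (meson cong_sym cong_trans)
    then have "[b = b0] (mod int p)" using cong_mult_rcancel[OF assms(1)] by blast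
    then show "b \<in> {b0}" using U_eq[OF b(1) assms(2)] by simp
  qed
  moreover have "b0 \<in> {b \<in> U. [b * z = 1] (mod int p)}" using assms by simp
  ultimately have "{b \<in> U. [b * z = 1] (mod int p)} = {b0}" by blast
  then have "(\<Sum>b\<in>U. if [b * z = 1] (mod int p) then F b else 0) = sum F {b0}"
    using sum.inter_filter[OF finU, of F "\<lambda>b. [b * z = 1] (mod int p)"] by simp
  then show ?thesis by simp
qed

lemma reindex_mult:
  assumes "coprime s (int p)"
  shows "(\<Sum>a\<in>U. G a) = (\<Sum>a\<in>U. G ((a * s) mod int p))"
proof -
  let ?h = "\<lambda>a. (a * s) mod int p"
  have inj: "inj_on ?h U"
  proof (rule inj_onI)
    fix a b assume ab: "a \<in> U" "b \<in> U" "?h a = ?h b"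
    then have "[a * s = b * s] (mod int p)" by (simp add: cong_def)
    then have "[a = b] (mod int p)" using cong_mult_rcancel[OF assms] by blast
    then show "a = b" using U_eq ab by blast
  qed
  have sub: "?h ` U \<subseteq> U" using U_mod U_cop assms by auto
  have "?h ` U = U" using endo_inj_surj[OF finU sub inj] .
  then have "bij_betw ?h U U" using inj unfolding bij_betw_def by simp
  then show ?thesis using sum.reindex_bij_betw[of ?h U U G] by simp
qed

definition inner :: "int \<Rightarrow> int \<Rightarrow> 'h" where
  "inner m k = (\<Sum>a\<in>U. \<Sum>b\<in>U. smul (pw a (- k) \<otimes>\<^bsub>padic_ints p\<^esub> pw b (k - m)) (msym a b))"

definition coefrel :: "int \<Rightarrow> int \<Rightarrow> int \<Rightarrow> int \<Rightarrow> nat \<Rightarrow> int" where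
  "coefrel m t s k = (pw t (m - k) \<ominus>\<^bsub>padic_ints p\<^esub> pw s (m - k)) \<ominus>\<^bsub>padic_ints p\<^esub>
      pw t (m - k) \<otimes>\<^bsub>padic_ints p\<^esub> pw s k"

lemma coefrel_carrier: "coprime t (int p) \<Longrightarrow> coprime s (int p) \<Longrightarrow> coefrel m t s k \<in> carrier (padic_ints p)"
  unfolding coefrel_def using pw_carrier by simp

lemma coef_id:
  assumes ca: "coprime a (int p)" and cb: "coprime b (int p)" and ct: "coprime t (int p)" and cs: "coprime s (int p)"
  shows "coefrel m t s k \<otimes>\<^bsub>padic_ints p\<^esub> (pw a (- k) \<otimes>\<^bsub>padic_ints p\<^esub> pw b (k - m)) =
    (pw (b * (t ^ (p - 2) * a ^ (p - 2))) k \<otimes>\<^bsub>padic_ints p\<^esub> (pw t m \<otimes>\<^bsub>padic_ints p\<^esub> pw b (- m))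
     \<ominus>\<^bsub>padic_ints p\<^esub> pw (b * (s ^ (p - 2) * a ^ (p - 2))) k \<otimes>\<^bsub>padic_ints p\<^esub> (pw s m \<otimes>\<^bsub>padic_ints p\<^esub> pw b (- m)))
     \<ominus>\<^bsub>padic_ints p\<^esub> pw (b * (t ^ (p - 2) * s * a ^ (p - 2))) k \<otimes>\<^bsub>padic_ints p\<^esub> (pw t m \<otimes>\<^bsub>padic_ints p\<^esub> pw b (- m))"
proof -
  let ?R = "padic_ints p"
  note pc = pw_carrier[OF ca] pw_carrier[OF cb] pw_carrier[OF ct] pw_carrier[OF cs]
  have sp: "pw t (m - k) = pw t m \<otimes>\<^bsub>?R\<^esub> pw t (- k)" "pw s (m - k) = pw s m \<otimes>\<^bsub>?R\<^esub> pw s (- k)"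
      "pw b (k - m) = pw b k \<otimes>\<^bsub>?R\<^esub> pw b (- m)"
    using pw_add[OF ct, of m "-k"] pw_add[OF cs, of m "-k"] pw_add[OF cb, of k "-m"] by simp_all
  have cpa: "coprime (a ^ (p - 2)) (int p)" "coprime (t ^ (p - 2)) (int p)" "coprime (s ^ (p - 2)) (int p)"
    using ca ct cs by simp_all
  have X1: "pw (b * (t ^ (p - 2) * a ^ (p - 2))) k = pw b k \<otimes>\<^bsub>?R\<^esub> (pw t (- k) \<otimes>\<^bsub>?R\<^esub> pw a (- k))"
    using pw_mult[OF cb, of "t ^ (p - 2) * a ^ (p - 2)" k] pw_mult[OF cpa(2) cpa(1), of k]
      pw_inv_pow[OF ct] pw_inv_pow[OF ca] cpa by simp
  have X2: "pw (b * (s ^ (p - 2) * a ^ (p - 2))) k = pw b k \<otimes>\<^bsub>?R\<^esub> (pw s (- k) \<otimes>\<^bsub>?R\<^esub> pw a (- k))"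
    using pw_mult[OF cb, of "s ^ (p - 2) * a ^ (p - 2)" k] pw_mult[OF cpa(3) cpa(1), of k]
      pw_inv_pow[OF cs] pw_inv_pow[OF ca] cpa by simp
  have X3: "pw (b * (t ^ (p - 2) * s * a ^ (p - 2))) k =
      pw b k \<otimes>\<^bsub>?R\<^esub> (pw t (- k) \<otimes>\<^bsub>?R\<^esub> pw s k \<otimes>\<^bsub>?R\<^esub> pw a (- k))"
  proof -
    have c3: "coprime (t ^ (p - 2) * s) (int p)" using cpa cs by simp
    have "pw (b * (t ^ (p - 2) * s * a ^ (p - 2))) k = pw b k \<otimes>\<^bsub>?R\<^esub> pw (t ^ (p - 2) * s * a ^ (p - 2)) k"
      using pw_mult[OF cb, of "t ^ (p - 2) * s * a ^ (p - 2)" k] c3 cpa by simp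
    also have "pw (t ^ (p - 2) * s * a ^ (p - 2)) k = pw (t ^ (p - 2) * s) k \<otimes>\<^bsub>?R\<^esub> pw (a ^ (p - 2)) k"
      by (rule pw_mult[OF c3 cpa(1)])
    also have "pw (t ^ (p - 2) * s) k = pw (t ^ (p - 2)) k \<otimes>\<^bsub>?R\<^esub> pw s k"
      by (rule pw_mult[OF cpa(2) cs])
    finally show ?thesis using pw_inv_pow[OF ct] pw_inv_pow[OF ca] by simp
  qed
  show ?thesis
    unfolding coefrel_def X1 X2 X3 sp
    using pc by (simp add: R.minus_eq R.l_distr R.r_distr R.l_minus R.r_minus R.m_ac)
qed

end


context zph begin

lemma pow_pm2: "x * x ^ (p - 2) = x ^ (p - 1)"
proof -
  have "p - 1 = Suc (p - 2)" using p2 by simp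
  then show ?thesis by simp
qed

lemma three_zero:
  assumes ca: "coprime a (int p)"
  shows "msym a (a * t) - msym a (a * (t + 1)) - msym (a * (t + 1)) (a * t) = 0"
proof -
  have "coprime (gcd a (a * t)) (int p)"
    by (rule coprime_divisors[of _ a _ "int p"]) (use ca in simp_all)
  then have "unimodular p a (a * t)" unfolding unimodular_def by simp
  then have "msym a (a * t) = msym a (a + a * t) + msym (a + a * t) (a * t)" by (rule msym_three)
  moreover have "a + a * t = a * (t + 1)" by (simp add: algebra_simps)
  ultimately show ?thesis by simp
qed

lemma relation:
  assumes ct: "coprime t (int p)" and cs: "coprime (t + 1) (int p)"
  shows "(\<Sum>k<p - 1. smul (coefrel m t (t + 1) (int k)) (inner m (int k))) = 0"
proof -
  let ?R = "padic_ints p"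
  define s where "s = t + 1"
  have cs': "coprime s (int p)" using cs unfolding s_def .
  define Y1 where "Y1 b = pw t m \<otimes>\<^bsub>?R\<^esub> pw b (- m)" for b
  define Y2 where "Y2 b = pw s m \<otimes>\<^bsub>?R\<^esub> pw b (- m)" for b
  define z1 where "z1 a = t ^ (p - 2) * a ^ (p - 2)" for a
  define z2 where "z2 a = s ^ (p - 2) * a ^ (p - 2)" for a
  define z3 where "z3 a = t ^ (p - 2) * s * a ^ (p - 2)" for a
  define Ph where "Ph v = (\<Sum>k<p - 1. v)" for v :: 'h
  have Ph_diff: "Ph (x - y) = Ph x - Ph y" for x y unfolding Ph_def by (simp add: sum_subtractf)
  have Ph_zero: "Ph 0 = 0" unfolding Ph_def by simp
  have cz: "coprime (z1 a) (int p)" "coprime (z2 a) (int p)" "coprime (z3 a) (int p)" if "coprime a (int p)" for a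
    unfolding z1_def z2_def z3_def using that ct cs' by simp_all
  have cY: "Y1 b \<in> carrier ?R" "Y2 b \<in> carrier ?R" if "coprime b (int p)" for b
    unfolding Y1_def Y2_def using that ct cs' pw_carrier by simp_all
  have step1: "(\<Sum>k<p - 1. smul (coefrel m t s (int k)) (inner m (int k))) =
     (\<Sum>a\<in>U. \<Sum>b\<in>U. \<Sum>k<p - 1. smul (coefrel m t s (int k) \<otimes>\<^bsub>?R\<^esub>
           (pw a (- int k) \<otimes>\<^bsub>?R\<^esub> pw b (int k - m))) (msym a b))"
  proof -
    have "(\<Sum>k<p - 1. smul (coefrel m t s (int k)) (inner m (int k))) =
      (\<Sum>k<p - 1. \<Sum>a\<in>U. \<Sum>b\<in>U. smul (coefrel m t s (int k) \<otimes>\<^bsub>?R\<^esub>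
           (pw a (- int k) \<otimes>\<^bsub>?R\<^esub> pw b (int k - m))) (msym a b))"
      unfolding inner_def
      by (intro sum.cong refl) (simp add: smul_sumr coefrel_carrier[OF ct cs'] smul_mult U_cop pw_carrier)
    also have "\<dots> = (\<Sum>a\<in>U. \<Sum>k<p - 1. \<Sum>b\<in>U. smul (coefrel m t s (int k) \<otimes>\<^bsub>?R\<^esub>
           (pw a (- int k) \<otimes>\<^bsub>?R\<^esub> pw b (int k - m))) (msym a b))"
      by (rule sum.swap)
    also have "\<dots> = (\<Sum>a\<in>U. \<Sum>b\<in>U. \<Sum>k<p - 1. smul (coefrel m t s (int k) \<otimes>\<^bsub>?R\<^esub>
           (pw a (- int k) \<otimes>\<^bsub>?R\<^esub> pw b (int k - m))) (msym a b))"
      by (intro sum.cong refl sum.swap)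
    finally show ?thesis .
  qed
  have step2: "(\<Sum>k<p - 1. smul (coefrel m t s (int k) \<otimes>\<^bsub>?R\<^esub>
           (pw a (- int k) \<otimes>\<^bsub>?R\<^esub> pw b (int k - m))) (msym a b)) =
      ((if [b * z1 a = 1] (mod int p) then Ph (smul (Y1 b) (msym a b)) else 0)
      - (if [b * z2 a = 1] (mod int p) then Ph (smul (Y2 b) (msym a b)) else 0))
      - (if [b * z3 a = 1] (mod int p) then Ph (smul (Y1 b) (msym a b)) else 0)"
    if ab: "a \<in> U" "b \<in> U" for a b
  proof -
    have ca: "coprime a (int p)" and cb: "coprime b (int p)" using ab U_cop by auto
    have "(\<Sum>k<p - 1. smul (coefrel m t s (int k) \<otimes>\<^bsub>?R\<^esub>
           (pw a (- int k) \<otimes>\<^bsub>?R\<^esub> pw b (int k - m))) (msym a b)) =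
      (\<Sum>k<p - 1. (smul (pw (b * z1 a) (int k) \<otimes>\<^bsub>?R\<^esub> Y1 b) (msym a b)
           - smul (pw (b * z2 a) (int k) \<otimes>\<^bsub>?R\<^esub> Y2 b) (msym a b))
           - smul (pw (b * z3 a) (int k) \<otimes>\<^bsub>?R\<^esub> Y1 b) (msym a b))"
    proof (intro sum.cong refl)
      fix k
      have cc: "coprime (b * z1 a) (int p)" "coprime (b * z2 a) (int p)" "coprime (b * z3 a) (int p)"
        using cz[OF ca] cb by simp_all
      show "smul (coefrel m t s (int k) \<otimes>\<^bsub>?R\<^esub> (pw a (- int k) \<otimes>\<^bsub>?R\<^esub> pw b (int k - m))) (msym a b) =
        (smul (pw (b * z1 a) (int k) \<otimes>\<^bsub>?R\<^esub> Y1 b) (msym a b)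
           - smul (pw (b * z2 a) (int k) \<otimes>\<^bsub>?R\<^esub> Y2 b) (msym a b))
           - smul (pw (b * z3 a) (int k) \<otimes>\<^bsub>?R\<^esub> Y1 b) (msym a b)"
        unfolding coef_id[OF ca cb ct cs', of m "int k"] z1_def z2_def z3_def Y1_def Y2_def
        using cc[unfolded z1_def z2_def z3_def] pw_carrier ca cb ct cs'
        by (simp add: smul_minusl)
    qed
    also have "\<dots> = ((\<Sum>k<p - 1. smul (pw (b * z1 a) (int k) \<otimes>\<^bsub>?R\<^esub> Y1 b) (msym a b))
           - (\<Sum>k<p - 1. smul (pw (b * z2 a) (int k) \<otimes>\<^bsub>?R\<^esub> Y2 b) (msym a b)))
           - (\<Sum>k<p - 1. smul (pw (b * z3 a) (int k) \<otimes>\<^bsub>?R\<^esub> Y1 b) (msym a b))"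
      by (simp add: sum_subtractf)
    finally show ?thesis
      unfolding Ph_def
      using orth_pw[of "b * z1 a" "Y1 b" "msym a b"] orth_pw[of "b * z2 a" "Y2 b" "msym a b"]
        orth_pw[of "b * z3 a" "Y1 b" "msym a b"] cz[OF ca] cb cY[OF cb]
      by simp
  qed
  have modc: "[x mod int p * z = x * z] (mod int p)" for x z
    by (simp add: cong_def mod_mult_left_eq)
  have pwm: "pw (x mod int p) k = pw x k" for x k by (rule pw_cong) (simp add: cong_def)
  have step3: "(\<Sum>b\<in>U. ((if [b * z1 a = 1] (mod int p) then Ph (smul (Y1 b) (msym a b)) else 0)
      - (if [b * z2 a = 1] (mod int p) then Ph (smul (Y2 b) (msym a b)) else 0))
      - (if [b * z3 a = 1] (mod int p) then Ph (smul (Y1 b) (msym a b)) else 0)) =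
     (Ph (smul (pw a (- m)) (msym a (a * t))) - Ph (smul (pw a (- m)) (msym a (a * s))))
     - Ph (smul (pw a (- m) \<otimes>\<^bsub>?R\<^esub> pw s m) (msym a (a * t * s ^ (p - 2))))"
    if aU: "a \<in> U" for a
  proof -
    have ca: "coprime a (int p)" using aU U_cop by auto
    have fa: "[a ^ (p - 1) = 1] (mod int p)" "[t ^ (p - 1) = 1] (mod int p)" "[s ^ (p - 1) = 1] (mod int p)"
      using fermat_p ca ct cs' by auto
    note pc = pw_carrier[OF ca] pw_carrier[OF ct] pw_carrier[OF cs']
    have b1: "(a * t) mod int p \<in> U" using U_mod ca ct by simp
    have e1: "[(a * t) mod int p * z1 a = 1] (mod int p)"
    proof -
      have "(a * t) * z1 a = a ^ (p - 1) * t ^ (p - 1)"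
        unfolding z1_def pow_pm2[symmetric] by (simp add: ac_simps)
      then have "[(a * t) * z1 a = 1 * 1] (mod int p)" using cong_mult[OF fa(1) fa(2)] by simp
      then show ?thesis using modc cong_trans by fastforce
    qed
    have K: "pw x m \<otimes>\<^bsub>?R\<^esub> (pw a (- m) \<otimes>\<^bsub>?R\<^esub> pw x (- m)) = pw a (- m)" if cx: "coprime x (int p)" for x
    proof -
      have "pw x m \<otimes>\<^bsub>?R\<^esub> (pw a (- m) \<otimes>\<^bsub>?R\<^esub> pw x (- m)) = pw a (- m) \<otimes>\<^bsub>?R\<^esub> (pw x m \<otimes>\<^bsub>?R\<^esub> pw x (- m))"
        using R.m_lcomm[of "pw x m" "pw a (- m)" "pw x (- m)"] pw_carrier[OF cx] pw_carrier[OF ca] by simp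
      then show ?thesis using pw_inv[OF cx, of m] pw_carrier[OF ca] by simp
    qed
    have v1: "Y1 ((a * t) mod int p) = pw a (- m)"
      unfolding Y1_def pwm pw_mult[OF ca ct] using K[OF ct] by simp
    have m1: "msym a ((a * t) mod int p) = msym a (a * t)" by (rule msym_per) (simp_all add: cong_def)
    have S1: "(\<Sum>b\<in>U. if [b * z1 a = 1] (mod int p) then Ph (smul (Y1 b) (msym a b)) else 0)
        = Ph (smul (pw a (- m)) (msym a (a * t)))"
      using collapse[OF cz(1)[OF ca] b1 e1, where F="\<lambda>b. Ph (smul (Y1 b) (msym a b))"] v1 m1 by simp
    have b2: "(a * s) mod int p \<in> U" using U_mod ca cs' by simp
    have e2: "[(a * s) mod int p * z2 a = 1] (mod int p)"
    proof -
      have "(a * s) * z2 a = a ^ (p - 1) * s ^ (p - 1)"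
        unfolding z2_def pow_pm2[symmetric] by (simp add: ac_simps)
      then have "[(a * s) * z2 a = 1 * 1] (mod int p)" using cong_mult[OF fa(1) fa(3)] by simp
      then show ?thesis using modc cong_trans by fastforce
    qed
    have v2: "Y2 ((a * s) mod int p) = pw a (- m)"
      unfolding Y2_def pwm pw_mult[OF ca cs'] using K[OF cs'] by simp
    have m2: "msym a ((a * s) mod int p) = msym a (a * s)" by (rule msym_per) (simp_all add: cong_def)
    have S2: "(\<Sum>b\<in>U. if [b * z2 a = 1] (mod int p) then Ph (smul (Y2 b) (msym a b)) else 0)
        = Ph (smul (pw a (- m)) (msym a (a * s)))"
      using collapse[OF cz(2)[OF ca] b2 e2, where F="\<lambda>b. Ph (smul (Y2 b) (msym a b))"] v2 m2 by simp
    have cs2: "coprime (s ^ (p - 2)) (int p)" using cs' by simp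
    have b3: "(a * t * s ^ (p - 2)) mod int p \<in> U" using U_mod ca ct cs' by simp
    have e3: "[(a * t * s ^ (p - 2)) mod int p * z3 a = 1] (mod int p)"
    proof -
      have "(a * t * s ^ (p - 2)) * z3 a = a ^ (p - 1) * t ^ (p - 1) * s ^ (p - 1)"
        unfolding z3_def pow_pm2[symmetric] by (simp add: ac_simps)
      then have "[(a * t * s ^ (p - 2)) * z3 a = 1 * 1 * 1] (mod int p)" using cong_mult[OF cong_mult[OF fa(1) fa(2)] fa(3)] by simp
      then show ?thesis using modc cong_trans by fastforce
    qed
    have v3: "Y1 ((a * t * s ^ (p - 2)) mod int p) = pw a (- m) \<otimes>\<^bsub>?R\<^esub> pw s m"
    proof -
      have "pw (a * t * s ^ (p - 2)) (- m) = pw a (- m) \<otimes>\<^bsub>?R\<^esub> pw t (- m) \<otimes>\<^bsub>?R\<^esub> pw s m"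
        using pw_mult[of "a * t" "s ^ (p - 2)" "- m"] pw_mult[OF ca ct, of "- m"] pw_inv_pow[OF cs', of "- m"]
          ca ct cs2 by simp
      then show ?thesis
        unfolding Y1_def pwm using K[OF ct] pc R.m_assoc[of "pw t m" "pw a (- m) \<otimes>\<^bsub>?R\<^esub> pw t (- m)" "pw s m"]
        by simp
    qed
    have m3: "msym a ((a * t * s ^ (p - 2)) mod int p) = msym a (a * t * s ^ (p - 2))"
      by (rule msym_per) (simp_all add: cong_def)
    have S3: "(\<Sum>b\<in>U. if [b * z3 a = 1] (mod int p) then Ph (smul (Y1 b) (msym a b)) else 0)
        = Ph (smul (pw a (- m) \<otimes>\<^bsub>?R\<^esub> pw s m) (msym a (a * t * s ^ (p - 2))))"
      using collapse[OF cz(3)[OF ca] b3 e3, where F="\<lambda>b. Ph (smul (Y1 b) (msym a b))"] v3 m3 by simp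
    show ?thesis using S1 S2 S3 by (simp add: sum_subtractf)
  qed
  have step4: "(\<Sum>a\<in>U. Ph (smul (pw a (- m) \<otimes>\<^bsub>?R\<^esub> pw s m) (msym a (a * t * s ^ (p - 2))))) =
      (\<Sum>a\<in>U. Ph (smul (pw a (- m)) (msym (a * s) (a * t))))"
  proof -
    have "(\<Sum>a\<in>U. Ph (smul (pw a (- m) \<otimes>\<^bsub>?R\<^esub> pw s m) (msym a (a * t * s ^ (p - 2))))) =
       (\<Sum>a\<in>U. Ph (smul (pw ((a * s) mod int p) (- m) \<otimes>\<^bsub>?R\<^esub> pw s m)
            (msym ((a * s) mod int p) ((a * s) mod int p * t * s ^ (p - 2)))))"
      by (rule reindex_mult[OF cs'])
    also have "\<dots> = (\<Sum>a\<in>U. Ph (smul (pw a (- m)) (msym (a * s) (a * t))))"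
    proof (intro sum.cong refl)
      fix a assume aU: "a \<in> U"
      have ca: "coprime a (int p)" using aU U_cop by auto
      have "pw ((a * s) mod int p) (- m) \<otimes>\<^bsub>?R\<^esub> pw s m = pw a (- m)"
        unfolding pwm pw_mult[OF ca cs'] using pw_carrier[OF ca] pw_carrier[OF cs'] pw_inv[OF cs', of "- m"]
        by (simp add: R.m_assoc)
      moreover have "msym ((a * s) mod int p) ((a * s) mod int p * t * s ^ (p - 2)) = msym (a * s) (a * t)"
      proof (rule msym_per)
        show "[(a * s) mod int p = a * s] (mod int p)" by (simp add: cong_def)
        have "(a * s) * t * s ^ (p - 2) = (a * t) * (s * s ^ (p - 2))" by (simp add: ac_simps)
        also have "\<dots> = (a * t) * s ^ (p - 1)" by (simp only: pow_pm2)
        finally have eq: "(a * s) * t * s ^ (p - 2) = (a * t) * s ^ (p - 1)" .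
        have "[(a * t) * s ^ (p - 1) = (a * t) * 1] (mod int p)"
          by (rule cong_mult[OF cong_refl fermat_p[OF cs']])
        then have "[(a * s) * t * s ^ (p - 2) = a * t] (mod int p)" unfolding eq by simp
        moreover have "[(a * s) mod int p * t * s ^ (p - 2) = (a * s) * t * s ^ (p - 2)] (mod int p)"
        proof -
          have h: "[(a * s) mod int p = a * s] (mod int p)" by (simp add: cong_def)
          show ?thesis by (rule cong_mult[OF cong_mult[OF h cong_refl] cong_refl])
        qed
        ultimately show "[(a * s) mod int p * t * s ^ (p - 2) = a * t] (mod int p)" using cong_trans by blast
      qed
      ultimately show "Ph (smul (pw ((a * s) mod int p) (- m) \<otimes>\<^bsub>?R\<^esub> pw s m)
            (msym ((a * s) mod int p) ((a * s) mod int p * t * s ^ (p - 2)))) =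
          Ph (smul (pw a (- m)) (msym (a * s) (a * t)))" by simp
    qed
    finally show ?thesis .
  qed
  have "(\<Sum>k<p - 1. smul (coefrel m t s (int k)) (inner m (int k))) =
     (\<Sum>a\<in>U. (Ph (smul (pw a (- m)) (msym a (a * t))) - Ph (smul (pw a (- m)) (msym a (a * s))))
     - Ph (smul (pw a (- m) \<otimes>\<^bsub>?R\<^esub> pw s m) (msym a (a * t * s ^ (p - 2)))))"
  proof -
    have "(\<Sum>a\<in>U. \<Sum>b\<in>U. \<Sum>k<p - 1. smul (coefrel m t s (int k) \<otimes>\<^bsub>?R\<^esub>
           (pw a (- int k) \<otimes>\<^bsub>?R\<^esub> pw b (int k - m))) (msym a b)) =
       (\<Sum>a\<in>U. \<Sum>b\<in>U. ((if [b * z1 a = 1] (mod int p) then Ph (smul (Y1 b) (msym a b)) else 0)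
      - (if [b * z2 a = 1] (mod int p) then Ph (smul (Y2 b) (msym a b)) else 0))
      - (if [b * z3 a = 1] (mod int p) then Ph (smul (Y1 b) (msym a b)) else 0))"
    proof (rule sum.cong[OF refl])
      fix a assume a: "a \<in> U"
      show "(\<Sum>b\<in>U. \<Sum>k<p - 1. smul (coefrel m t s (int k) \<otimes>\<^bsub>?R\<^esub>
           (pw a (- int k) \<otimes>\<^bsub>?R\<^esub> pw b (int k - m))) (msym a b)) =
         (\<Sum>b\<in>U. ((if [b * z1 a = 1] (mod int p) then Ph (smul (Y1 b) (msym a b)) else 0)
      - (if [b * z2 a = 1] (mod int p) then Ph (smul (Y2 b) (msym a b)) else 0))
      - (if [b * z3 a = 1] (mod int p) then Ph (smul (Y1 b) (msym a b)) else 0))"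
      proof (rule sum.cong[OF refl])
        fix b assume b: "b \<in> U"
        show "(\<Sum>k<p - 1. smul (coefrel m t s (int k) \<otimes>\<^bsub>?R\<^esub>
           (pw a (- int k) \<otimes>\<^bsub>?R\<^esub> pw b (int k - m))) (msym a b)) =
          ((if [b * z1 a = 1] (mod int p) then Ph (smul (Y1 b) (msym a b)) else 0)
      - (if [b * z2 a = 1] (mod int p) then Ph (smul (Y2 b) (msym a b)) else 0))
      - (if [b * z3 a = 1] (mod int p) then Ph (smul (Y1 b) (msym a b)) else 0)"
          by (rule step2[OF a b])
      qed
    qed
    also have "\<dots> = (\<Sum>a\<in>U. (Ph (smul (pw a (- m)) (msym a (a * t))) - Ph (smul (pw a (- m)) (msym a (a * s))))
     - Ph (smul (pw a (- m) \<otimes>\<^bsub>?R\<^esub> pw s m) (msym a (a * t * s ^ (p - 2)))))"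
      by (rule sum.cong[OF refl]) (rule step3)
    finally show ?thesis unfolding step1 .
  qed
  also have "\<dots> = (\<Sum>a\<in>U. (Ph (smul (pw a (- m)) (msym a (a * t))) - Ph (smul (pw a (- m)) (msym a (a * s)))))
     - (\<Sum>a\<in>U. Ph (smul (pw a (- m) \<otimes>\<^bsub>?R\<^esub> pw s m) (msym a (a * t * s ^ (p - 2)))))"
    by (simp add: sum_subtractf)
  also have "\<dots> = (\<Sum>a\<in>U. (Ph (smul (pw a (- m)) (msym a (a * t))) - Ph (smul (pw a (- m)) (msym a (a * s))))
     - Ph (smul (pw a (- m)) (msym (a * s) (a * t))))"
    unfolding step4 by (simp add: sum_subtractf)
  also have "\<dots> = (\<Sum>a\<in>U. Ph (smul (pw a (- m)) (msym a (a * t) - msym a (a * s) - msym (a * s) (a * t))))"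
    by (intro sum.cong refl) (simp add: Ph_diff smul_diffr U_cop pw_carrier)
  also have "\<dots> = 0"
  proof (rule sum.neutral, rule ballI)
    fix a assume a: "a \<in> U"
    have "msym a (a * t) - msym a (a * s) - msym (a * s) (a * t) = 0"
      unfolding s_def by (rule three_zero[OF U_cop[OF a]])
    then show "Ph (smul (pw a (- m)) (msym a (a * t) - msym a (a * s) - msym (a * s) (a * t))) = 0"
      using smul_zeror[OF pw_carrier[OF U_cop[OF a]]] Ph_zero by simp
  qed
  finally show ?thesis unfolding s_def .
qed

end


context zph begin

lemma inner_sym:
  "inner m (m - k) = - smul (pw (-1) (- k)) (inner m k)"
proof -
  let ?R = "padic_ints p"
  have cm1: "coprime (-1::int) (int p)" by simp
  define c where "c = pw (-1) (- k)"
  have cc: "c \<in> carrier ?R" unfolding c_def using pw_carrier[OF cm1] .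
  have "inner m (m - k) = (\<Sum>a\<in>U. \<Sum>b\<in>U. smul (pw a (k - m) \<otimes>\<^bsub>?R\<^esub> pw b (- k)) (msym a b))"
    unfolding inner_def by simp
  also have "\<dots> = (\<Sum>a\<in>U. \<Sum>b\<in>U. - smul (pw a (k - m) \<otimes>\<^bsub>?R\<^esub> pw b (- k)) (msym (- b) a))"
  proof (intro sum.cong refl)
    fix a b assume ab: "a \<in> U" "b \<in> U"
    have "coprime (gcd a b) (int p)"
      by (rule coprime_divisors[of _ a _ "int p"]) (use U_cop[OF ab(1)] in simp_all)
    then have "msym a b = - msym (- b) a" using msym_anti unfolding unimodular_def by blast
    then show "smul (pw a (k - m) \<otimes>\<^bsub>?R\<^esub> pw b (- k)) (msym a b) =
        - smul (pw a (k - m) \<otimes>\<^bsub>?R\<^esub> pw b (- k)) (msym (- b) a)"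
      using smul_negr pw_carrier U_cop ab by simp
  qed
  also have "\<dots> = - (\<Sum>a\<in>U. \<Sum>b\<in>U. smul (pw a (k - m) \<otimes>\<^bsub>?R\<^esub> pw b (- k)) (msym (- b) a))"
    by (simp add: sum_negf)
  also have "\<dots> = - (\<Sum>b\<in>U. \<Sum>a\<in>U. smul (pw a (k - m) \<otimes>\<^bsub>?R\<^esub> pw b (- k)) (msym (- b) a))"
    by (subst sum.swap) (rule refl)
  also have "(\<Sum>b\<in>U. \<Sum>a\<in>U. smul (pw a (k - m) \<otimes>\<^bsub>?R\<^esub> pw b (- k)) (msym (- b) a)) =
     (\<Sum>b\<in>U. \<Sum>a\<in>U. smul (pw a (k - m) \<otimes>\<^bsub>?R\<^esub> pw ((b * -1) mod int p) (- k)) (msym (- ((b * -1) mod int p)) a))"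
    by (rule reindex_mult[OF cm1])
  also have "\<dots> = (\<Sum>b\<in>U. \<Sum>a\<in>U. smul c (smul (pw b (- k) \<otimes>\<^bsub>?R\<^esub> pw a (k - m)) (msym b a)))"
  proof (intro sum.cong refl)
    fix b a assume ba: "b \<in> U" "a \<in> U"
    have cb: "coprime b (int p)" and ca: "coprime a (int p)" using ba U_cop by auto
    have "pw ((b * -1) mod int p) (- k) = pw (b * -1) (- k)" by (rule pw_cong) (simp add: cong_def)
    also have "\<dots> = pw b (- k) \<otimes>\<^bsub>?R\<^esub> c" unfolding c_def by (rule pw_mult[OF cb cm1])
    finally have e1: "pw ((b * -1) mod int p) (- k) = pw b (- k) \<otimes>\<^bsub>?R\<^esub> c" .
    have e2: "msym (- ((b * -1) mod int p)) a = msym b a"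
    proof (rule msym_per)
      have "[(b * -1) mod int p = - b] (mod int p)" by (simp add: cong_def)
      then have "[- ((b * -1) mod int p) = - (- b)] (mod int p)" by (rule cong_minus_minus_iff[THEN iffD2])
      then show "[- ((b * -1) mod int p) = b] (mod int p)" by simp
    qed simp
    show "smul (pw a (k - m) \<otimes>\<^bsub>?R\<^esub> pw ((b * -1) mod int p) (- k)) (msym (- ((b * -1) mod int p)) a) =
        smul c (smul (pw b (- k) \<otimes>\<^bsub>?R\<^esub> pw a (k - m)) (msym b a))"
      unfolding e1 e2 using cc pw_carrier[OF ca] pw_carrier[OF cb]
      by (simp add: smul_mult[symmetric] R.m_ac)
  qed
  also have "\<dots> = smul c (inner m k)"
    unfolding inner_def using cc by (simp add: smul_sumr)
  finally show ?thesis unfolding c_def .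
qed

lemma inner_sym2: "inner m (m - 2) = - inner m 2"
proof -
  have "pw (-1) (- 2) = \<one>\<^bsub>padic_ints p\<^esub>" using pw_neg1_even[of "-1"] by simp
  then show ?thesis using inner_sym[of m 2] smul_one by simp
qed

lemma inner_cong: "[k = l] (mod int (p - 1)) \<Longrightarrow> inner m k = inner m l"
proof -
  assume h: "[k = l] (mod int (p - 1))"
  have "[- k = - l] (mod int (p - 1))" using h by (simp add: cong_minus_minus_iff)
  moreover have "[k - m = l - m] (mod int (p - 1))" using h by (simp add: cong_diff)
  ultimately have "pw a (- k) = pw a (- l)" "pw b (k - m) = pw b (l - m)" for a b
    using pw_exp_cong by blast+
  then show ?thesis unfolding inner_def by simp
qed

lemma alpha_eq:
  assumes th: "\<And>a. coprime a (int p) \<Longrightarrow> \<theta> a = pw a m"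
  shows "alpha_sym p p smul msym 1 1 (chi j) (char_mult p p \<theta> (char_inv p p (chi j))) =
     smul (inv\<^bsub>padic_ints p\<^esub> (zp_of_int p (int (totient p) ^ 2))) (inner m j)"
proof -
  let ?R = "padic_ints p"
  have UU: "{a \<in> {0..<int p}. coprime a (int p)} = U" unfolding U_def ..
  have coef: "char_inv p p (chi j) a \<otimes>\<^bsub>?R\<^esub> char_inv p p (char_mult p p \<theta> (char_inv p p (chi j))) b =
       pw a (- j) \<otimes>\<^bsub>?R\<^esub> pw b (j - m)" if "a \<in> U" "b \<in> U" for a b
  proof -
    have ca: "coprime a (int p)" and cb: "coprime b (int p)" using that U_cop by auto
    have i1: "char_inv p p (chi j) a = pw a (- j)" by (subst char_inv_chi) (simp add: chi_def ca)
    have "char_mult p p \<theta> (char_inv p p (chi j)) b = pw b m \<otimes>\<^bsub>?R\<^esub> pw b (- j)"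
      by (subst char_inv_chi) (simp add: char_mult_def chi_def cb th[OF cb])
    also have "\<dots> = pw b (m - j)" using pw_add[OF cb, of m "- j"] by simp
    finally have "char_inv p p (char_mult p p \<theta> (char_inv p p (chi j))) b = inv\<^bsub>?R\<^esub> (pw b (m - j))"
      unfolding char_inv_def using cb by simp
    also have "\<dots> = pw b (j - m)" using pw_inv_eq[OF cb, of "m - j"] by simp
    finally show ?thesis using i1 by simp
  qed
  show ?thesis
    unfolding alpha_sym_def UU inner_def
    by (intro arg_cong[where f="smul _"] sum.cong refl) (simp add: coef)
qed

end


lemma psum:
  assumes "prime p" "n > 0"
  shows "[(\<Sum>t<p. (int t) ^ n) = (if (p - 1) dvd n then -1 else 0)] (mod int p)"
proof -
  have p1: "p > 1" using prime_gt_1_nat[OF assms(1)] .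
  show ?thesis
  proof (cases "(p - 1) dvd n")
    case True
    then obtain q where q: "n = (p - 1) * q" by blast
    have one: "[(int t) ^ n = 1] (mod int p)" if "0 < t" "t < p" for t
    proof -
      have "coprime (int t) (int p)"
        using that assms(1) by (simp add: coprime_commute prime_imp_coprime_nat nat_dvd_not_less)
      then have "coprime t p" by simp
      then have "[t ^ (p - 1) = 1] (mod p)" using euler_theorem totient_prime[OF assms(1)] by metis
      then have "[(t ^ (p - 1)) ^ q = 1 ^ q] (mod p)" by (rule cong_pow)
      then have "[t ^ n = 1] (mod p)" unfolding q by (simp add: power_mult)
      then show ?thesis by (metis cong_int_iff of_nat_1 of_nat_power)
    qed
    have "(\<Sum>t<p. (int t) ^ n) = (int 0) ^ n + (\<Sum>t\<in>{1..<p}. (int t) ^ n)"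
    proof -
      have "{..<p} = insert 0 {1..<p}" using p1 by auto
      then show ?thesis by simp
    qed
    also have "[\<dots> = 0 + (\<Sum>t\<in>{1..<p}. 1)] (mod int p)"
      using assms(2) by (intro cong_add cong_sum) (auto intro: one simp: zero_power)
    also have "(0::int) + (\<Sum>t\<in>{1..<p}. 1) = int p - 1" using p1 by simp
    also have "[int p - 1 = -1] (mod int p)" by (simp add: cong_iff_dvd_diff)
    finally show ?thesis using True by simp
  next
    case False
    obtain g where g: "residue_primroot p g" using prime_primitive_root_exists[OF p1 assms(1)] by blast
    have og: "ord p g = p - 1" using g totient_prime[OF assms(1)] unfolding residue_primroot_def by simp
    have cg: "coprime g p" using g unfolding residue_primroot_def by (simp add: coprime_commute)
    have ng: "\<not> [g ^ n = 1] (mod p)" using False og ord_divides by metis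
    define S where "S = (\<Sum>t<p. (int t) ^ n)"
    let ?h = "\<lambda>t. g * t mod p"
    have inj: "inj_on ?h {..<p}"
    proof (rule inj_onI)
      fix a b assume ab: "a \<in> {..<p}" "b \<in> {..<p}" "?h a = ?h b"
      then have "[g * a = g * b] (mod p)" by (simp add: cong_def)
      then have "[a = b] (mod p)" using cong_mult_lcancel_nat cg by (metis coprime_commute)
      then show "a = b" using ab by (simp add: cong_def)
    qed
    have sub: "?h ` {..<p} \<subseteq> {..<p}" using p1 by auto
    have bij: "bij_betw ?h {..<p} {..<p}"
      using endo_inj_surj[OF _ sub inj] inj unfolding bij_betw_def by simp
    have "S = (\<Sum>t<p. (int (?h t)) ^ n)"
      unfolding S_def using sum.reindex_bij_betw[OF bij, of "\<lambda>t. (int t) ^ n"] by simp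
    also have "[\<dots> = (\<Sum>t<p. (int g) ^ n * (int t) ^ n)] (mod int p)"
    proof (intro cong_sum)
      fix t
      have "[int (g * t mod p) = int g * int t] (mod int p)" by (simp add: cong_def of_nat_mod)
      then show "[int (g * t mod p) ^ n = int g ^ n * int t ^ n] (mod int p)"
        by (metis cong_pow power_mult_distrib)
    qed
    also have "(\<Sum>t<p. (int g) ^ n * (int t) ^ n) = (int g) ^ n * S" unfolding S_def by (simp add: sum_distrib_left)
    finally have "[(int g) ^ n * S = 1 * S] (mod int p)" by (simp add: cong_sym)
    then have "int p dvd ((int g) ^ n - 1) * S" by (simp add: cong_iff_dvd_diff algebra_simps)
    moreover have "\<not> int p dvd ((int g) ^ n - 1)"
    proof
      assume "int p dvd ((int g) ^ n - 1)"
      then have "[(int g) ^ n = 1] (mod int p)" by (simp add: cong_iff_dvd_diff)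
      then have "[int (g ^ n) = int 1] (mod int p)" by simp
      then show False using ng by (simp only: cong_int_iff)
    qed
    moreover have "prime (int p)" using assms(1) by simp
    ultimately have "int p dvd S" using prime_dvd_mult_iff by blast
    then show ?thesis using False unfolding S_def by (simp add: cong_iff_dvd_diff)
  qed
qed


lemma dvd_range:
  fixes p x :: nat
  assumes "(p - 1) dvd x" "0 < x" "x \<le> 2 * p - 3" "p \<ge> 2"
  shows "x = p - 1"
proof -
  obtain q where q: "x = (p - 1) * q" using assms(1) by blast
  have "x \<noteq> 0" using assms(2) by simp
  then have "q \<noteq> 0" using q by auto
  then have "q \<ge> 1" by simp
  moreover have "q < 2"
  proof (rule ccontr)
    assume "\<not> q < 2"
    then have "(p - 1) * 2 \<le> (p - 1) * q" by (intro mult_le_mono2) simp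
    then have "(p - 1) * 2 \<le> x" using q by simp
    then show False using assms(3,4) by linarith
  qed
  ultimately have "q = 1" by simp
  then show ?thesis using q by simp
qed

lemma Lsum:
  assumes "prime p" "A \<ge> 1" "A + B \<le> 2 * p - 3"
  shows "[(\<Sum>t<p. (int t) ^ A * (1 + int t) ^ B) =
     - (if A \<le> p - 1 \<and> p - 1 - A \<le> B then int (B choose (p - 1 - A)) else 0)] (mod int p)"
proof -
  have p2: "p \<ge> 2" using prime_ge_2_nat[OF assms(1)] .
  have "(\<Sum>t<p. (int t) ^ A * (1 + int t) ^ B) =
      (\<Sum>t<p. \<Sum>j\<le>B. int (B choose j) * (int t) ^ (A + j))"
  proof (intro sum.cong refl)
    fix t
    have "(1 + int t) ^ B = (\<Sum>j\<le>B. of_nat (B choose j) * (int t) ^ j * 1 ^ (B - j))"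
      using binomial_ring[of "int t" 1 B] by (simp add: add.commute)
    then show "(int t) ^ A * (1 + int t) ^ B = (\<Sum>j\<le>B. int (B choose j) * (int t) ^ (A + j))"
      by (simp add: sum_distrib_left power_add algebra_simps)
  qed
  also have "\<dots> = (\<Sum>j\<le>B. int (B choose j) * (\<Sum>t<p. (int t) ^ (A + j)))"
    by (subst sum.swap) (simp add: sum_distrib_left)
  also have "[\<dots> = (\<Sum>j\<le>B. int (B choose j) * (if (p - 1) dvd (A + j) then -1 else 0))] (mod int p)"
    by (intro cong_sum cong_mult cong_refl psum[OF assms(1)]) (use assms(2) in simp)
  also have "(\<Sum>j\<le>B. int (B choose j) * (if (p - 1) dvd (A + j) then -1 else 0)) =
      (\<Sum>j\<le>B. if j = p - 1 - A \<and> A \<le> p - 1 then - int (B choose j) else 0)"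
  proof (intro sum.cong refl)
    fix j assume j: "j \<in> {..B}"
    have "(p - 1) dvd (A + j) \<longleftrightarrow> (j = p - 1 - A \<and> A \<le> p - 1)"
    proof
      assume "(p - 1) dvd (A + j)"
      then have "A + j = p - 1" by (rule dvd_range) (use assms j p2 in auto)
      then show "j = p - 1 - A \<and> A \<le> p - 1" by auto
    next
      assume "j = p - 1 - A \<and> A \<le> p - 1"
      then have "A + j = p - 1" by auto
      then show "(p - 1) dvd (A + j)" by simp
    qed
    then show "int (B choose j) * (if (p - 1) dvd (A + j) then -1 else 0) =
        (if j = p - 1 - A \<and> A \<le> p - 1 then - int (B choose j) else 0)" by simp
  qed
  also have "\<dots> = - (if A \<le> p - 1 \<and> p - 1 - A \<le> B then int (B choose (p - 1 - A)) else 0)"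
  proof (cases "A \<le> p - 1")
    case True
    then show ?thesis by (simp add: sum.delta)
  next
    case False
    then show ?thesis by simp
  qed
  finally show ?thesis .
qed

definition Q2 :: "nat \<Rightarrow> int \<Rightarrow> int \<Rightarrow> int" where
  "Q2 e t s = t ^ e - s ^ e - t ^ e * s ^ 2 - (t ^ 2 - s ^ 2 - t ^ 2 * s ^ e)"

lemma Q2_cong: "[t = t'] (mod m) \<Longrightarrow> [s = s'] (mod m) \<Longrightarrow> [Q2 e t s = Q2 e t' s'] (mod m)"
  unfolding Q2_def by (intro cong_diff cong_mult cong_pow) auto

lemma good_t:
  assumes "prime p" "even e" "4 \<le> e" "e + 3 \<le> p"
  shows "\<exists>t::int. 1 \<le> t \<and> t \<le> int p - 2 \<and> \<not> int p dvd Q2 e t (t + 1)"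
proof (rule ccontr)
  assume H: "\<not> ?thesis"
  have p2: "p \<ge> 2" using prime_ge_2_nat[OF assms(1)] .
  define E where "E = p - 2 - e"
  have E1: "E \<ge> 1" unfolding E_def using assms by simp
  have allt: "int p dvd (int t) ^ E * Q2 e (int t) (1 + int t)" if "t < p" for t
  proof (cases "t = 0")
    case True
    have "Q2 e 0 1 = 0" unfolding Q2_def using assms(3) by (simp add: zero_power)
    then show ?thesis using True by simp
  next
    case False
    show ?thesis
    proof (cases "t = p - 1")
      case True
      have "[Q2 e (int t) (1 + int t) = Q2 e (-1) 0] (mod int p)"
      proof (rule Q2_cong)
        show "[int t = -1] (mod int p)" using True p2 by (simp add: cong_iff_dvd_diff of_nat_diff)
        show "[1 + int t = 0] (mod int p)" using True p2 by (simp add: cong_iff_dvd_diff of_nat_diff)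
      qed
      moreover have "Q2 e (-1) 0 = 0" unfolding Q2_def using assms(2,3) by (simp add: zero_power)
      ultimately have "int p dvd Q2 e (int t) (1 + int t)" by (simp add: cong_0_iff)
      then show ?thesis by simp
    next
      case False2: False
      have "1 \<le> int t" "int t \<le> int p - 2" using False False2 that by auto
      then have "int p dvd Q2 e (int t) (int t + 1)" using H by blast
      then show ?thesis by (simp add: add.commute)
    qed
  qed
  define L where "L A B = (\<Sum>t<p. (int t) ^ A * (1 + int t) ^ B)" for A B
  have "(\<Sum>t<p. (int t) ^ E * Q2 e (int t) (1 + int t)) =
     ((((L (E + e) 0 - L E e) - L (E + e) 2) - L (E + 2) 0) + L E 2) + L (E + 2) e"
  proof -
    have pt: "(int t) ^ E * Q2 e (int t) (1 + int t) =
       (((((int t) ^ (E + e) * (1 + int t) ^ 0 - (int t) ^ E * (1 + int t) ^ e)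
         - (int t) ^ (E + e) * (1 + int t) ^ 2) - (int t) ^ (E + 2) * (1 + int t) ^ 0)
         + (int t) ^ E * (1 + int t) ^ 2) + (int t) ^ (E + 2) * (1 + int t) ^ e" for t
      by (simp add: Q2_def power_add power2_eq_square algebra_simps)
    show ?thesis unfolding L_def pt by (simp only: sum.distrib sum_subtractf)
  qed
  moreover have "[(\<Sum>t<p. (int t) ^ E * Q2 e (int t) (1 + int t)) = 0] (mod int p)"
  proof -
    have "int p dvd (\<Sum>t<p. (int t) ^ E * Q2 e (int t) (1 + int t))" by (rule dvd_sum) (simp add: allt)
    then show ?thesis by (simp add: cong_0_iff)
  qed
  moreover have "[((((L (E + e) 0 - L E e) - L (E + e) 2) - L (E + 2) 0) + L E 2) + L (E + 2) e =
       ((((0 - 0) - (-2)) - 0) + 0) + (- int e)] (mod int p)"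
  proof -
    have eE: "E + e = p - 2" "E + 2 = p - e" unfolding E_def using assms by auto
    have p7: "p \<ge> 7" using assms by simp
    have l1: "[L (E + e) 0 = 0] (mod int p)"
      using Lsum[OF assms(1), of "p - 2" 0] p7 unfolding L_def eE by simp
    have l2: "[L E e = 0] (mod int p)"
      using Lsum[OF assms(1), of E e] E1 assms unfolding L_def E_def by simp
    have l3: "[L (E + e) 2 = -2] (mod int p)"
    proof -
      have f: "p - 1 - (p - 2) = 1" "1 \<le> p - 2" "p - 2 + 2 \<le> 2 * p - 3" "p - 2 \<le> p - 1" using p7 by auto
      have "[L (p - 2) 2 = - (if p - 2 \<le> p - 1 \<and> p - 1 - (p - 2) \<le> 2 then int (2 choose (p - 1 - (p - 2))) else 0)] (mod int p)"
        unfolding L_def by (rule Lsum[OF assms(1) f(2,3)])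
      then show ?thesis unfolding eE f(1) using f(4) by simp
    qed
    have l4: "[L (E + 2) 0 = 0] (mod int p)"
      using Lsum[OF assms(1), of "p - e" 0] p7 assms unfolding L_def eE by simp
    have l5: "[L E 2 = 0] (mod int p)"
      using Lsum[OF assms(1), of E 2] E1 assms unfolding L_def E_def by simp
    have ce: "e choose (e - 1) = e"
    proof -
      have "e choose (e - 1) = e choose (e - (e - 1))" by (rule binomial_symmetric) simp
      moreover have "e - (e - 1) = 1" using assms(3) by simp
      ultimately show ?thesis by simp
    qed
    have pe: "p - 1 - (p - e) = e - 1" using assms by simp
    have l6: "[L (E + 2) e = - int e] (mod int p)"
    proof -
      have f: "1 \<le> p - e" "p - e + e \<le> 2 * p - 3" "p - e \<le> p - 1" "e - 1 \<le> e" using p7 assms by auto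
      have "[L (p - e) e = - (if p - e \<le> p - 1 \<and> p - 1 - (p - e) \<le> e then int (e choose (p - 1 - (p - e))) else 0)] (mod int p)"
        unfolding L_def by (rule Lsum[OF assms(1) f(1,2)])
      then show ?thesis unfolding eE pe ce using f(3,4) by simp
    qed
    show ?thesis by (intro cong_add cong_diff l1 l2 l3 l4 l5 l6)
  qed
  ultimately have "[((((0 - 0) - (-2)) - 0) + 0) + (- int e) = 0] (mod int p)"
    by (metis cong_sym cong_trans)
  then have "[2 - int e = 0] (mod int p)" by simp
  then have "int p dvd (int e - 2)" by (simp add: cong_0_iff dvd_diff_commute)
  moreover have "0 < int e - 2" "int e - 2 < int p" using assms by auto
  ultimately show False using zdvd_imp_le by fastforce
qed


context zph begin

lemma comp1_minus:
  assumes "x \<in> carrier (padic_ints p)" "y \<in> carrier (padic_ints p)"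
  shows "[(x \<ominus>\<^bsub>padic_ints p\<^esub> y) 1 = x 1 - y 1] (mod int p)"
proof -
  have "(x \<ominus>\<^bsub>padic_ints p\<^esub> y) 1 = (x 1 + (- y 1) mod int p) mod int p"
    unfolding R.minus_eq zp_minus_comp[OF p0 assms(2)] by (simp add: zp_simps)
  then show ?thesis by (simp add: cong_def mod_add_right_eq)
qed

lemma comp1_mult:
  "[(x \<otimes>\<^bsub>padic_ints p\<^esub> y) 1 = x 1 * y 1] (mod int p)"
  by (simp add: zp_simps cong_def)

lemma comp1_pw:
  assumes "coprime x (int p)" "0 \<le> j" "j < int (p - 1)"
  shows "[pw x j 1 = x ^ nat j] (mod int p)"
  using pw_comp1[OF assms] by (simp add: cong_def)

lemma chi_exp_cong: "[k = l] (mod int (p - 1)) \<Longrightarrow> chi k = chi l"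
  unfolding chi_def using pw_exp_cong by (auto intro!: ext)

lemma unit_two: "\<one>\<^bsub>padic_ints p\<^esub> \<oplus>\<^bsub>padic_ints p\<^esub> \<one>\<^bsub>padic_ints p\<^esub> \<in> Units (padic_ints p)"
proof (rule zp_unitI[OF prime])
  show "\<one>\<^bsub>padic_ints p\<^esub> \<oplus>\<^bsub>padic_ints p\<^esub> \<one>\<^bsub>padic_ints p\<^esub> \<in> carrier (padic_ints p)" by simp
  have o: "1 mod int p = 1" using p2 by simp
  have e: "(\<one>\<^bsub>padic_ints p\<^esub> \<oplus>\<^bsub>padic_ints p\<^esub> \<one>\<^bsub>padic_ints p\<^esub>) 1 = 2 mod int p"
    by (simp add: zp_simps o)
  have "\<not> int p dvd 2"
  proof
    assume "int p dvd 2"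
    then have "p dvd 2" by presburger
    then have "p \<le> 2" by (simp add: dvd_imp_le)
    then show False using p3 by simp
  qed
  then have "coprime (int p) 2" using prime_imp_coprime[OF prime_int] by blast
  then show "coprime ((\<one>\<^bsub>padic_ints p\<^esub> \<oplus>\<^bsub>padic_ints p\<^esub> \<one>\<^bsub>padic_ints p\<^esub>) 1) (int p)"
    unfolding e using p0 by (simp add: coprime_commute)
qed

lemma d_unit: "inv\<^bsub>padic_ints p\<^esub> (zp_of_int p (int (totient p) ^ 2)) \<in> carrier (padic_ints p)"
proof -
  have u: "zp_of_int p (int (totient p) ^ 2) \<in> Units (padic_ints p)"
  proof (rule zp_unitI[OF prime zp_of_int_carrier[OF p0]])
    have "coprime (int (p - 1)) (int p)"
      using p0 coprime_diff_one_left[of "int p"] by (simp add: of_nat_diff)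
    then have "coprime (int (totient p) ^ 2) (int p)" using totient_prime[OF prime] by simp
    then show "coprime (zp_of_int p (int (totient p) ^ 2) 1) (int p)"
      unfolding zp_of_int_def using p0 by simp
  qed
  then show ?thesis by simp
qed

lemma main_zph:
  assumes thc: "is_Delta_char p p \<theta>"
    and ne: "\<theta> \<noteq> char_mult p p (teichmuller p) (teichmuller p)"
  shows "alpha_sym p p smul msym 1 1 (char_mult p p (teichmuller p) (teichmuller p))
       (char_mult p p \<theta> (char_inv p p (char_mult p p (teichmuller p) (teichmuller p))))
     \<in> zp_span p smul {alpha_sym p p smul msym 1 1 \<chi> (char_mult p p \<theta> (char_inv p p \<chi>)) | \<chi>.
         \<chi> \<in> char_group p p - {char_mult p p (teichmuller p) (teichmuller p),
            char_mult p p \<theta> (char_inv p p (char_mult p p (teichmuller p) (teichmuller p)))}}"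
    (is "?b \<in> zp_span p smul ?S")
proof -
  let ?R = "padic_ints p"
  define d where "d = inv\<^bsub>?R\<^esub> (zp_of_int p (int (totient p) ^ 2))"
  have dc: "d \<in> carrier ?R" unfolding d_def by (rule d_unit)
  have ich: "is_char p p \<theta>" and tm1: "\<theta> (-1) = \<one>\<^bsub>?R\<^esub>" using thc unfolding is_Delta_char_def by auto
  obtain m where m: "0 \<le> m" "m < int (p - 1)" "\<And>a. coprime a (int p) \<Longrightarrow> \<theta> a = pw a m"
    using char_is_chi[OF ich] by blast
  have th_eq: "\<theta> = chi m"
  proof (rule ext)
    fix a show "\<theta> a = chi m a"
      using m(3) ich unfolding chi_def is_char_def by auto
  qed
  have w2: "char_mult p p (teichmuller p) (teichmuller p) = chi 2" by (rule omega2_eq)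
  have tw: "char_mult p p \<theta> (char_inv p p (chi 2)) = chi (m - 2)"
    unfolding th_eq char_inv_chi char_mult_chi by simp
  have ncong: "\<not> [m = 2] (mod int (p - 1))"
  proof
    assume "[m = 2] (mod int (p - 1))"
    then have "chi m = chi 2" by (rule chi_exp_cong)
    then show False using ne th_eq w2 by simp
  qed
  have meven: "even m"
  proof (rule ccontr)
    assume od: "odd m"
    have "pw (-1) m = \<one>\<^bsub>?R\<^esub>" using tm1 m(3)[of "-1"] by simp
    then have "pw (-1) m 1 = 1 mod int p" by (simp add: zp_simps)
    moreover have "pw (-1) m 1 = (-1) ^ nat m mod int p" using pw_comp1[of "-1" m] m by simp
    moreover have "odd (nat m)" using od m(1) by (simp add: even_nat_iff)
    ultimately have "(-1) mod int p = 1 mod int p" by simp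
    then have "int p dvd 2" by (simp add: mod_eq_dvd_iff)
    then have "p dvd 2" by presburger
    then have "p \<le> 2" by (rule dvd_imp_le) simp
    then show False using p3 by simp
  qed
  define e where "e = (m - 2) mod int (p - 1)"
  have e0: "0 \<le> e" "e < int (p - 1)" unfolding e_def using p2 by simp_all
  have econg: "[e = m - 2] (mod int (p - 1))" unfolding e_def by (simp add: cong_def)
  have ene0: "e \<noteq> 0"
  proof
    assume "e = 0"
    then have "[m - 2 = 0] (mod int (p - 1))" using econg by (simp add: cong_sym)
    then have "[m = 2] (mod int (p - 1))" by (simp add: cong_iff_dvd_diff)
    then show False using ncong by simp
  qed
  have eeven: "even e"
  proof -
    have ev: "even (int (p - 1))" using odd p0 by (simp add: of_nat_diff)
    have "e = (m - 2) - (m - 2) div int (p - 1) * int (p - 1)" unfolding e_def by (simp add: minus_div_mult_eq_mod)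
    then show ?thesis using meven ev by simp
  qed
  have eR: "chi e = chi (m - 2)" by (rule chi_exp_cong[OF econg])
  have beta: "?b = smul d (inner m 2)"
    unfolding w2 d_def by (rule alpha_eq[OF m(3)])
  have inner_e: "inner m e = - inner m 2"
    using inner_cong[OF econg, of m] inner_sym2[of m] by simp
  show ?thesis
  proof (cases "e = 2")
    case True
    then have "inner m 2 = - inner m 2" using inner_e by simp
    then have "inner m 2 + inner m 2 = 0" by (simp add: eq_neg_iff_add_eq_0)
    then have "smul (\<one>\<^bsub>?R\<^esub> \<oplus>\<^bsub>?R\<^esub> \<one>\<^bsub>?R\<^esub>) (inner m 2) = 0"
      by (simp add: smul_addl smul_one)
    then have "inner m 2 = 0" using smul_unit_cancel[OF unit_two] by blast
    then have "?b = 0" using beta smul_zeror[OF dc] by simp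
    then show ?thesis using span_zero by simp
  next
    case False
    define ne where "ne = nat e"
    have ine: "int ne = e" unfolding ne_def using e0 by simp
    have e4: "4 \<le> e"
    proof -
      obtain j where j: "e = 2 * j" using eeven by blast
      then have "j \<noteq> 0" "j \<noteq> 1" "j \<ge> 0" using ene0 False e0 by auto
      then show ?thesis using j by simp
    qed
    have ep: "e \<le> int p - 3"
    proof -
      have "e \<noteq> int p - 2"
      proof
        assume "e = int p - 2"
        then have "odd e" using odd p0 by simp
        then show False using eeven by simp
      qed
      then show ?thesis using e0 p0 by (simp add: of_nat_diff)
    qed
    have ne4: "4 \<le> ne" "ne + 3 \<le> p" "even ne" using e4 ep eeven ine by (auto simp: ne_def even_nat_iff)
    have p7: "p \<ge> 7" using ne4 by simp
    obtain t where t: "1 \<le> t" "t \<le> int p - 2" "\<not> int p dvd Q2 ne t (t + 1)"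
      using good_t[OF prime ne4(3) ne4(1) ne4(2)] by blast
    have cop_range: "coprime x (int p)" if "1 \<le> x" "x \<le> int p - 1" for x
    proof -
      have "\<not> int p dvd x" using that zdvd_imp_le by fastforce
      then have "coprime (int p) x" using prime_imp_coprime[OF prime_int] by blast
      then show ?thesis by (simp add: coprime_commute)
    qed
    have ct: "coprime t (int p)" using cop_range t by simp
    have cs: "coprime (t + 1) (int p)" using cop_range t by simp
    define s where "s = t + 1"
    have cs': "coprime s (int p)" using cs unfolding s_def .
    define c where "c k = coefrel m t s (int k)" for k :: nat
    define E where "E k = smul d (inner m (int k))" for k :: nat
    have cc: "c k \<in> carrier ?R" for k unfolding c_def by (rule coefrel_carrier[OF ct cs'])
    have rel: "(\<Sum>k<p - 1. smul (c k) (E k)) = 0"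
    proof -
      have "(\<Sum>k<p - 1. smul (c k) (E k)) = smul d (\<Sum>k<p - 1. smul (c k) (inner m (int k)))"
        unfolding E_def using dc cc by (simp add: smul_sumr smul_comm)
      also have "(\<Sum>k<p - 1. smul (c k) (inner m (int k))) = 0"
        unfolding c_def s_def by (rule relation[OF ct cs])
      finally show ?thesis using smul_zeror[OF dc] by simp
    qed
    have n2: "ne \<noteq> 2" using False ine by auto
    have r2: "2 < p - 1" "ne < p - 1" using p7 e0 ine by auto
    define R0 where "R0 = {..<p - 1} - {2, ne}"
    have split: "{..<p - 1} = insert 2 (insert ne R0)" "2 \<notin> insert ne R0" "ne \<notin> R0" "finite R0"
      unfolding R0_def using r2 n2 by auto
    have Ene: "E ne = - E 2" unfolding E_def ine using inner_e smul_negr[OF dc] by simp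
    have "smul (c 2) (E 2) + smul (c ne) (E ne) + (\<Sum>k\<in>R0. smul (c k) (E k)) = 0"
      using rel unfolding split(1) using split(2-4) by (simp add: add.assoc)
    then have "smul (c 2 \<ominus>\<^bsub>?R\<^esub> c ne) (E 2) = - (\<Sum>k\<in>R0. smul (c k) (E k))"
      unfolding Ene using cc by (simp add: smul_minusl smul_negr eq_neg_iff_add_eq_0 algebra_simps)
    moreover have u: "c 2 \<ominus>\<^bsub>?R\<^esub> c ne \<in> Units ?R"
    proof (rule zp_unitI[OF prime])
      show "c 2 \<ominus>\<^bsub>?R\<^esub> c ne \<in> carrier ?R" using cc by simp
      have pe: "pw x (m - 2) = pw x e" "pw x (m - e) = pw x 2" for x
      proof -
        show "pw x (m - 2) = pw x e" by (rule pw_exp_cong) (use econg in \<open>simp add: cong_sym\<close>)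
        have "[m - e = 2] (mod int (p - 1))" using econg
          by (simp add: cong_iff_dvd_diff dvd_diff_commute algebra_simps)
        then show "pw x (m - e) = pw x 2" by (rule pw_exp_cong)
      qed
      have c2: "c 2 = (pw t e \<ominus>\<^bsub>?R\<^esub> pw s e) \<ominus>\<^bsub>?R\<^esub> pw t e \<otimes>\<^bsub>?R\<^esub> pw s 2"
        unfolding c_def coefrel_def using pe by simp
      have cne: "c ne = (pw t 2 \<ominus>\<^bsub>?R\<^esub> pw s 2) \<ominus>\<^bsub>?R\<^esub> pw t 2 \<otimes>\<^bsub>?R\<^esub> pw s e"
        unfolding c_def coefrel_def ine using pe by simp
      note pc = pw_carrier[OF ct] pw_carrier[OF cs']
      have rng: "0 \<le> (2::int)" "2 < int (p - 1)" using r2 by auto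
      have pt: "[pw t e 1 = t ^ ne] (mod int p)" "[pw s e 1 = s ^ ne] (mod int p)"
         "[pw t 2 1 = t ^ 2] (mod int p)" "[pw s 2 1 = s ^ 2] (mod int p)"
    proof -
      show "[pw t e 1 = t ^ ne] (mod int p)" unfolding ne_def by (rule comp1_pw[OF ct e0])
      show "[pw s e 1 = s ^ ne] (mod int p)" unfolding ne_def by (rule comp1_pw[OF cs' e0])
      have "nat 2 = 2" by simp
      then show "[pw t 2 1 = t ^ 2] (mod int p)" "[pw s 2 1 = s ^ 2] (mod int p)"
        using comp1_pw[OF ct rng] comp1_pw[OF cs' rng] by metis+
    qed
      have "[c 2 1 = (t ^ ne - s ^ ne) - t ^ ne * s ^ 2] (mod int p)"
      proof -
        have a1: "[(pw t e \<ominus>\<^bsub>?R\<^esub> pw s e) 1 = t ^ ne - s ^ ne] (mod int p)"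
          using cong_trans[OF comp1_minus[OF pw_carrier[OF ct] pw_carrier[OF cs']] cong_diff[OF pt(1) pt(2)]] .
        have a2: "[(pw t e \<otimes>\<^bsub>?R\<^esub> pw s 2) 1 = t ^ ne * s ^ 2] (mod int p)"
          using cong_trans[OF comp1_mult[of "pw t e" "pw s 2"] cong_mult[OF pt(1) pt(4)]] .
        have "(pw t e \<ominus>\<^bsub>?R\<^esub> pw s e) \<in> carrier ?R" "pw t e \<otimes>\<^bsub>?R\<^esub> pw s 2 \<in> carrier ?R"
          using pw_carrier[OF ct] pw_carrier[OF cs'] by simp_all
        from cong_trans[OF comp1_minus[OF this] cong_diff[OF a1 a2]] show ?thesis unfolding c2 .
      qed
      moreover have "[c ne 1 = (t ^ 2 - s ^ 2) - t ^ 2 * s ^ ne] (mod int p)"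
      proof -
        have a1: "[(pw t 2 \<ominus>\<^bsub>?R\<^esub> pw s 2) 1 = t ^ 2 - s ^ 2] (mod int p)"
          using cong_trans[OF comp1_minus[OF pw_carrier[OF ct] pw_carrier[OF cs']] cong_diff[OF pt(3) pt(4)]] .
        have a2: "[(pw t 2 \<otimes>\<^bsub>?R\<^esub> pw s e) 1 = t ^ 2 * s ^ ne] (mod int p)"
          using cong_trans[OF comp1_mult[of "pw t 2" "pw s e"] cong_mult[OF pt(3) pt(2)]] .
        have "(pw t 2 \<ominus>\<^bsub>?R\<^esub> pw s 2) \<in> carrier ?R" "pw t 2 \<otimes>\<^bsub>?R\<^esub> pw s e \<in> carrier ?R"
          using pw_carrier[OF ct] pw_carrier[OF cs'] by simp_all
        from cong_trans[OF comp1_minus[OF this] cong_diff[OF a1 a2]] show ?thesis unfolding cne .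
      qed
      ultimately have "[(c 2 \<ominus>\<^bsub>?R\<^esub> c ne) 1 = Q2 ne t s] (mod int p)"
        unfolding Q2_def by (rule cong_trans[OF comp1_minus[OF cc cc] cong_diff])
      moreover have "coprime (Q2 ne t s) (int p)"
        using prime_imp_coprime[OF prime_int t(3)[folded s_def]] by (simp add: coprime_commute)
      ultimately show "coprime ((c 2 \<ominus>\<^bsub>?R\<^esub> c ne) 1) (int p)"
        using cong_imp_coprime cong_sym by blast
    qed
    ultimately have "E 2 = smul (inv\<^bsub>?R\<^esub> (c 2 \<ominus>\<^bsub>?R\<^esub> c ne)) (- (\<Sum>k\<in>R0. smul (c k) (E k)))"
      using smul_mult[of "inv\<^bsub>?R\<^esub> (c 2 \<ominus>\<^bsub>?R\<^esub> c ne)" "c 2 \<ominus>\<^bsub>?R\<^esub> c ne" "E 2"] smul_one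
      by (simp add: R.Units_closed)
    moreover have "E k \<in> ?S" if "k \<in> R0" for k
    proof -
      have k: "k < p - 1" "k \<noteq> 2" "k \<noteq> ne" using that unfolding R0_def by auto
      have al: "alpha_sym p p smul msym 1 1 (chi (int k)) (char_mult p p \<theta> (char_inv p p (chi (int k)))) = E k"
        unfolding E_def d_def by (rule alpha_eq[OF m(3)])
      have i1: "int k < int (p - 1)" using k(1) by (simp only: of_nat_less_iff)
      have i2: "int 2 < int (p - 1)" using r2(1) by (simp only: of_nat_less_iff)
      have i3: "int ne < int (p - 1)" using r2(2) by (simp only: of_nat_less_iff)
      have n1: "chi (int k) \<noteq> chi 2"
      proof
        assume h: "chi (int k) = chi 2"
        have eq: "chi (int k) = chi (int 2)" using h by simp
        have "int k = int 2" using chi_distinct[OF _ i1 _ i2 eq] by simp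
        then show False using k by simp
      qed
      have n2: "chi (int k) \<noteq> chi e"
      proof
        assume h: "chi (int k) = chi e"
        have eq: "chi (int k) = chi (int ne)" using h ine by simp
        have "int k = int ne" using chi_distinct[OF _ i1 _ i3 eq] by simp
        then show False using k by simp
      qed
      show ?thesis unfolding w2 tw eR[symmetric]
        by (rule CollectI, rule exI[of _ "chi (int k)"]) (use al n1 n2 chi_in_group[of "int k"] in auto)
    qed
    ultimately have E2: "E 2 = smul (inv\<^bsub>?R\<^esub> (c 2 \<ominus>\<^bsub>?R\<^esub> c ne)) (- (\<Sum>k\<in>R0. smul (c k) (E k)))"
      and memS: "\<And>k. k \<in> R0 \<Longrightarrow> E k \<in> ?S" by blast+
    have "(\<Sum>k\<in>R0. smul (c k) (E k)) \<in> zp_span p smul ?S"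
    proof (rule span_sum)
      fix k assume "k \<in> R0"
      then show "smul (c k) (E k) \<in> zp_span p smul ?S" by (rule span_smul[OF cc span_gen[OF memS]])
    qed
    then have "E 2 \<in> zp_span p smul ?S"
      unfolding E2 by (intro span_smul span_neg) (use u in \<open>simp_all add: R.Units_closed\<close>)
    then show ?thesis using beta unfolding E_def by simp
  qed
qed

end


theorem lemma2p18:
  fixes p :: nat
    and \<theta> :: "int \<Rightarrow> nat \<Rightarrow> int"
    and smul :: "(nat \<Rightarrow> int) \<Rightarrow> 'h \<Rightarrow> 'h::ab_group_add"
    and dia :: "int \<Rightarrow> 'h \<Rightarrow> 'h"
    and msym :: "int \<Rightarrow> int \<Rightarrow> 'h"
  assumes "prime p" and "odd p"
    and "modsym_space p p smul dia msym"
    and "is_Delta_char p p \<theta>"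
    and "\<theta> \<noteq> char_mult p p (teichmuller p) (teichmuller p)"
  defines "\<omega>2 \<equiv> char_mult p p (teichmuller p) (teichmuller p)"
  defines "\<theta>\<omega>m2 \<equiv> char_mult p p \<theta> (char_inv p p \<omega>2)"
  defines "\<beta> \<equiv> alpha_sym p p smul msym 1 1 \<omega>2 \<theta>\<omega>m2"
  defines "A \<equiv> zp_span p smul
      {alpha_sym p p smul msym g h \<chi> (char_mult p p \<theta> (char_inv p p \<chi>)) | \<chi> g h.
         \<chi> \<in> char_group p p - {\<omega>2, \<theta>\<omega>m2} \<and> g > 0 \<and> h > 0 \<and>
         g dvd int p \<and> h dvd int p \<and> coprime g h}"
  shows "\<beta> \<in> zp_span p smul
           {alpha_sym p p smul msym 1 1 \<chi> (char_mult p p \<theta> (char_inv p p \<chi>)) | \<chi>.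
              \<chi> \<in> char_group p p - {\<omega>2, \<theta>\<omega>m2}}
         \<and> \<beta> \<in> A"
proof -
  interpret Z: zph p smul dia msym
    by (intro zph.intro zpl.intro zph_axioms.intro) (use assms(1-3) in auto)
  have m: "\<beta> \<in> zp_span p smul
           {alpha_sym p p smul msym 1 1 \<chi> (char_mult p p \<theta> (char_inv p p \<chi>)) | \<chi>.
              \<chi> \<in> char_group p p - {\<omega>2, \<theta>\<omega>m2}}"
    unfolding \<beta>_def \<theta>\<omega>m2_def \<omega>2_def by (rule Z.main_zph[OF assms(4,5)])
  moreover have "\<beta> \<in> A"
    unfolding A_def
  proof (rule Z.span_mono[OF _ m])
    show "{alpha_sym p p smul msym 1 1 \<chi> (char_mult p p \<theta> (char_inv p p \<chi>)) | \<chi>.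
              \<chi> \<in> char_group p p - {\<omega>2, \<theta>\<omega>m2}} \<subseteq>
      {alpha_sym p p smul msym g h \<chi> (char_mult p p \<theta> (char_inv p p \<chi>)) | \<chi> g h.
         \<chi> \<in> char_group p p - {\<omega>2, \<theta>\<omega>m2} \<and> g > 0 \<and> h > 0 \<and>
         g dvd int p \<and> h dvd int p \<and> coprime g h}"
    proof
      fix x assume "x \<in> {alpha_sym p p smul msym 1 1 \<chi> (char_mult p p \<theta> (char_inv p p \<chi>)) | \<chi>.
              \<chi> \<in> char_group p p - {\<omega>2, \<theta>\<omega>m2}}"
      then obtain \<chi> where "x = alpha_sym p p smul msym 1 1 \<chi> (char_mult p p \<theta> (char_inv p p \<chi>))"
        "\<chi> \<in> char_group p p - {\<omega>2, \<theta>\<omega>m2}" by blast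
      then show "x \<in> {alpha_sym p p smul msym g h \<chi> (char_mult p p \<theta> (char_inv p p \<chi>)) | \<chi> g h.
         \<chi> \<in> char_group p p - {\<omega>2, \<theta>\<omega>m2} \<and> g > 0 \<and> h > 0 \<and>
         g dvd int p \<and> h dvd int p \<and> coprime g h}"
        by (intro CollectI exI[of _ \<chi>] exI[of _ 1]) simp
    qed
  qed
  ultimately show ?thesis by blast
qed


end
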